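(* Let $\mathcal{G}=(S,\mathcal{F},\mathcal{L})$ be a $p$-local compact group, and let $\mathcal{P}=\{P_0=S,P_1,\dots,P_k\}$ be a complete fusion controlling family for $\mathcal{F}$. Then for each $\Psi\in\mathrm{Aut}^I_{\mathrm{typ}}(\mathcal{L})$, the collection $\Psi(\mathcal{P})=\{\Psi(P_0),\dots,\Psi(P_k)\}$ is a complete fusion controlling family. Furthermore, there is a group homomorphism $\upsilon\colon\mathrm{Out}_{\mathrm{typ}}(\mathcal{L})\to\Sigma_k$ defined by the relation $P_{\upsilon(\Psi)(i)}\in\Psi(P_i)^{N_{\mathcal{F}}(S)}$ for $1\le i\le k$.
   Context: A $p$-local compact group $(S,\mathcal{F},\mathcal{L})$ (Broto–Levi–Oliver): $S$ a discrete $p$-toral group, $\mathcal{F}$ a saturated fusion system over $S$, $\mathcal{L}$ its centric linking system with objects the $\mathcal{F}$-centric subgroups and structure functor $\delta$ from the transporter category of $S$; $\iota_{P,Q}=\delta_{P,Q}(1)$ for $P\le Q$. $\mathrm{Aut}^I_{\mathrm{typ}}(\mathcal{L})$ is the group of isotypical self equivalences of $\mathcal{L}$ (self equivalences restricting to an equivalence on the image of $\delta$) with $\Psi(\iota_{P,Q})=\iota_{\Psi(P),\Psi(Q)}$; $\mathrm{Out}_{\mathrm{typ}}(\mathcal{L})$ is the group of isotypical self equivalences modulo natural isomorphism, the quotient of $\mathrm{Aut}^I_{\mathrm{typ}}(\mathcal{L})$ by conjugation by $\mathrm{Aut}_{\mathcal{L}}(S)$. $N_{\mathcal{F}}(S)$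 is the fusion subsystem over $S$ generated by restrictions of elements of $\mathrm{Aut}_{\mathcal{F}}(S)$, and $Q^{N_{\mathcal{F}}(S)}$ denotes the set of $N_{\mathcal{F}}(S)$-conjugates of $Q$. A fusion controlling family is a finite set $\{P_0=S,\dots,P_k\}$ of fully $\mathcal{F}$-normalised subgroups ($N_S(P)$ of maximal order among $\mathcal{F}$-conjugates) containing at least one representative of each $\mathcal{F}$-conjugacy class of $\mathcal{F}$-centric $\mathcal{F}$-radical subgroups; it is complete if it consists of exactly one representative of each $N_{\mathcal{F}}(S)$-conjugacy class of $\mathcal{F}$-centric $\mathcal{F}$-radical subgroups ($\mathcal{F}$-radical: $\mathrm{Aut}_{\mathcal{F}}(P)/\mathrm{Inn}(P)$ has no nontrivial normal $p$-subgroup). $\Sigma_k$ is the symmetric group on $\{1,\dots,k\}$. *)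

theory Defs
  imports Complex_Main "HOL-Computational_Algebra.Primes" "HOL-Algebra.Coset" "HOL-Algebra.Sym_Groups"
begin

text \<open>The Pruefer group Z/p^infinity realised as p-power-denominator rationals in [0,1) under
addition mod 1; the discrete p-torus (Z/p^infinity)^r as r-tuples (coordinates >= r are 0).\<close>

definition prufer_torus :: "nat \<Rightarrow> nat \<Rightarrow> (nat \<Rightarrow> rat) monoid" where
  "prufer_torus p r = \<lparr> carrier = {x. (\<forall>i. r \<le> i \<longrightarrow> x i = 0) \<and>
        (\<forall>i<r. 0 \<le> x i \<and> x i < 1 \<and> (\<exists>n::nat. x i * of_nat p ^ n \<in> \<int>))},
      mult = (\<lambda>x y i. frac (x i + y i)), one = (\<lambda>i. 0) \<rparr>"

definition discrete_p_toral :: "nat \<Rightarrow> 'g monoid \<Rightarrow> bool" where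
  "discrete_p_toral p S \<longleftrightarrow> prime p \<and> group S \<and>
     (\<exists>T r. normal T S \<and> (S\<lparr>carrier := T\<rparr> \<cong> prufer_torus p r) \<and>
        finite (rcosets\<^bsub>S\<^esub> T) \<and> (\<exists>m. card (rcosets\<^bsub>S\<^esub> T) = p ^ m))"

text \<open>Identity component (maximal divisible subgroup), rank, and the "order"
 |P| = (rk P, |P/P_0|) ordered lexicographically.\<close>

definition divisible_sub :: "'g monoid \<Rightarrow> 'g set \<Rightarrow> bool" where
  "divisible_sub S H \<longleftrightarrow> (\<forall>x\<in>H. \<forall>n::nat. n > 0 \<longrightarrow> (\<exists>y\<in>H. y [^]\<^bsub>S\<^esub> n = x))"

definition ident_comp :: "'g monoid \<Rightarrow> 'g set \<Rightarrow> 'g set" where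
  "ident_comp S P = \<Union>{H. subgroup H S \<and> H \<subseteq> P \<and> divisible_sub S H}"

definition ptrank :: "nat \<Rightarrow> 'g monoid \<Rightarrow> 'g set \<Rightarrow> nat" where
  "ptrank p S P = (THE r. S\<lparr>carrier := ident_comp S P\<rparr> \<cong> prufer_torus p r)"

definition ptord :: "nat \<Rightarrow> 'g monoid \<Rightarrow> 'g set \<Rightarrow> nat \<times> nat" where
  "ptord p S P = (ptrank p S P, card (rcosets\<^bsub>S\<lparr>carrier := P\<rparr>\<^esub> (ident_comp S P)))"

definition ptord_le :: "nat \<times> nat \<Rightarrow> nat \<times> nat \<Rightarrow> bool" where
  "ptord_le a b \<longleftrightarrow> fst a < fst b \<or> (fst a = fst b \<and> snd a \<le> snd b)"

definition conjm :: "'g monoid \<Rightarrow> 'g \<Rightarrow> 'g \<Rightarrow> 'g" where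
  "conjm S g = (\<lambda>x. g \<otimes>\<^bsub>S\<^esub> x \<otimes>\<^bsub>S\<^esub> inv\<^bsub>S\<^esub> g)"

definition transp :: "'g monoid \<Rightarrow> 'g set \<Rightarrow> 'g set \<Rightarrow> 'g set" where
  "transp S P Q = {g \<in> carrier S. conjm S g ` P \<subseteq> Q}"

definition nrm :: "'g monoid \<Rightarrow> 'g set \<Rightarrow> 'g set" where
  "nrm S P = {g \<in> carrier S. conjm S g ` P = P}"

definition cent :: "'g monoid \<Rightarrow> 'g set \<Rightarrow> 'g set" where
  "cent S P = {g \<in> carrier S. \<forall>x\<in>P. g \<otimes>\<^bsub>S\<^esub> x = x \<otimes>\<^bsub>S\<^esub> g}"

definition homS :: "'g monoid \<Rightarrow> 'g set \<Rightarrow> 'g set \<Rightarrow> ('g \<Rightarrow> 'g) set" where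
  "homS S P Q = {restrict (conjm S g) P | g. g \<in> transp S P Q}"

definition injhom :: "'g monoid \<Rightarrow> 'g set \<Rightarrow> 'g set \<Rightarrow> ('g \<Rightarrow> 'g) set" where
  "injhom S P Q = {\<phi>. \<phi> \<in> extensional P \<and> \<phi> \<in> hom (S\<lparr>carrier := P\<rparr>) (S\<lparr>carrier := Q\<rparr>) \<and> inj_on \<phi> P}"

section \<open>Fusion systems\<close>

text \<open>A fusion system F over S: Hom_F(P,Q) = F P Q, morphisms are functions restricted to P.\<close>

definition fusion_system :: "'g monoid \<Rightarrow> ('g set \<Rightarrow> 'g set \<Rightarrow> ('g \<Rightarrow> 'g) set) \<Rightarrow> bool" where
  "fusion_system S F \<longleftrightarrow>
    (\<forall>P Q R. subgroup P S \<longrightarrow> subgroup Q S \<longrightarrow> subgroup R S \<longrightarrow>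
       homS S P Q \<subseteq> F P Q \<and> F P Q \<subseteq> injhom S P Q \<and>
       (\<forall>\<phi>\<in>F P Q. \<forall>\<psi>\<in>F Q R. restrict (\<psi> \<circ> \<phi>) P \<in> F P R) \<and>
       (\<forall>\<phi>\<in>F P Q. \<phi> \<in> F P (\<phi> ` P) \<and> restrict (inv_into P \<phi>) (\<phi> ` P) \<in> F (\<phi> ` P) P))"

definition fconj :: "'g monoid \<Rightarrow> ('g set \<Rightarrow> 'g set \<Rightarrow> ('g \<Rightarrow> 'g) set) \<Rightarrow> 'g set \<Rightarrow> 'g set set" where
  "fconj S F P = {\<phi> ` P | \<phi>. \<phi> \<in> F P (carrier S)}"

definition fully_normalized :: "nat \<Rightarrow> 'g monoid \<Rightarrow> ('g set \<Rightarrow> 'g set \<Rightarrow> ('g \<Rightarrow> 'g) set) \<Rightarrow> 'g set \<Rightarrow> bool" where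
  "fully_normalized p S F P \<longleftrightarrow> subgroup P S \<and>
     (\<forall>Q\<in>fconj S F P. ptord_le (ptord p S (nrm S Q)) (ptord p S (nrm S P)))"

definition fully_centralized :: "nat \<Rightarrow> 'g monoid \<Rightarrow> ('g set \<Rightarrow> 'g set \<Rightarrow> ('g \<Rightarrow> 'g) set) \<Rightarrow> 'g set \<Rightarrow> bool" where
  "fully_centralized p S F P \<longleftrightarrow> subgroup P S \<and>
     (\<forall>Q\<in>fconj S F P. ptord_le (ptord p S (cent S Q)) (ptord p S (cent S P)))"

definition autF_grp :: "'g monoid \<Rightarrow> ('g set \<Rightarrow> 'g set \<Rightarrow> ('g \<Rightarrow> 'g) set) \<Rightarrow> 'g set \<Rightarrow> ('g \<Rightarrow> 'g) monoid" where
  "autF_grp S F P = \<lparr> carrier = F P P, mult = (\<lambda>a b. restrict (a \<circ> b) P), one = restrict id P \<rparr>"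

definition inn :: "'g monoid \<Rightarrow> 'g set \<Rightarrow> ('g \<Rightarrow> 'g) set" where
  "inn S P = {restrict (conjm S g) P | g. g \<in> P}"

definition outF :: "'g monoid \<Rightarrow> ('g set \<Rightarrow> 'g set \<Rightarrow> ('g \<Rightarrow> 'g) set) \<Rightarrow> 'g set \<Rightarrow> ('g \<Rightarrow> 'g) set monoid" where
  "outF S F P = autF_grp S F P Mod inn S P"

definition outS :: "'g monoid \<Rightarrow> ('g set \<Rightarrow> 'g set \<Rightarrow> ('g \<Rightarrow> 'g) set) \<Rightarrow> 'g set \<Rightarrow> ('g \<Rightarrow> 'g) set set" where
  "outS S F P = (\<lambda>a. inn S P #>\<^bsub>autF_grp S F P\<^esub> a) ` {restrict (conjm S g) P | g. g \<in> nrm S P}"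

definition sylow_sub :: "nat \<Rightarrow> ('a, 'b) monoid_scheme \<Rightarrow> 'a set \<Rightarrow> bool" where
  "sylow_sub p G H \<longleftrightarrow> subgroup H G \<and> finite (carrier G) \<and>
     (\<exists>a. card H = p ^ a \<and> p ^ a dvd order G \<and> \<not> p ^ Suc a dvd order G)"

definition N_phi :: "'g monoid \<Rightarrow> 'g set \<Rightarrow> ('g \<Rightarrow> 'g) \<Rightarrow> 'g set" where
  "N_phi S P \<phi> = {g \<in> nrm S P. \<exists>h\<in>nrm S (\<phi> ` P).
      restrict (\<phi> \<circ> conjm S g \<circ> inv_into P \<phi>) (\<phi> ` P) = restrict (conjm S h) (\<phi> ` P)}"

definition saturated :: "nat \<Rightarrow> 'g monoid \<Rightarrow> ('g set \<Rightarrow> 'g set \<Rightarrow> ('g \<Rightarrow> 'g) set) \<Rightarrow> bool" where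
  "saturated p S F \<longleftrightarrow> fusion_system S F \<and>
    \<comment> \<open>(I)\<close>
    (\<forall>P. fully_normalized p S F P \<longrightarrow> fully_centralized p S F P \<and>
        finite (carrier (outF S F P)) \<and> sylow_sub p (outF S F P) (outS S F P)) \<and>
    \<comment> \<open>(II)\<close>
    (\<forall>P \<phi>. subgroup P S \<longrightarrow> \<phi> \<in> F P (carrier S) \<longrightarrow> fully_centralized p S F (\<phi> ` P) \<longrightarrow>
        (\<exists>\<psi>\<in>F (N_phi S P \<phi>) (carrier S). \<forall>x\<in>P. \<psi> x = \<phi> x)) \<and>
    \<comment> \<open>(III) continuity\<close>
    (\<forall>Pn :: nat \<Rightarrow> 'g set. (\<forall>n. subgroup (Pn n) S \<and> Pn n \<subseteq> Pn (Suc n)) \<longrightarrow>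
       (\<forall>\<phi>. \<phi> \<in> extensional (\<Union>n. Pn n) \<longrightarrow> \<phi> \<in> hom (S\<lparr>carrier := \<Union>n. Pn n\<rparr>) S \<longrightarrow>
            (\<forall>n. restrict \<phi> (Pn n) \<in> F (Pn n) (carrier S)) \<longrightarrow> \<phi> \<in> F (\<Union>n. Pn n) (carrier S)))"

definition F_centric :: "'g monoid \<Rightarrow> ('g set \<Rightarrow> 'g set \<Rightarrow> ('g \<Rightarrow> 'g) set) \<Rightarrow> 'g set \<Rightarrow> bool" where
  "F_centric S F P \<longleftrightarrow> subgroup P S \<and> (\<forall>Q\<in>fconj S F P. cent S Q \<subseteq> Q)"

definition F_radical :: "nat \<Rightarrow> 'g monoid \<Rightarrow> ('g set \<Rightarrow> 'g set \<Rightarrow> ('g \<Rightarrow> 'g) set) \<Rightarrow> 'g set \<Rightarrow> bool" where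
  "F_radical p S F P \<longleftrightarrow> subgroup P S \<and>
     (\<forall>H. normal H (outF S F P) \<longrightarrow> finite H \<longrightarrow> (\<exists>n. card H = p ^ n) \<longrightarrow>
          H = {\<one>\<^bsub>outF S F P\<^esub>})"

section \<open>Centric linking systems\<close>

record ('g, 'm) lsys =
  L_mor :: "'g set \<Rightarrow> 'g set \<Rightarrow> 'm set"
  L_cmp :: "'g set \<Rightarrow> 'g set \<Rightarrow> 'g set \<Rightarrow> 'm \<Rightarrow> 'm \<Rightarrow> 'm"  \<comment> \<open>L_cmp P Q R g f = g o f\<close>
  L_id  :: "'g set \<Rightarrow> 'm"
  L_dlt :: "'g set \<Rightarrow> 'g set \<Rightarrow> 'g \<Rightarrow> 'm"
  L_prj :: "'g set \<Rightarrow> 'g set \<Rightarrow> 'm \<Rightarrow> 'g \<Rightarrow> 'g"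

definition L_ob :: "'g monoid \<Rightarrow> ('g set \<Rightarrow> 'g set \<Rightarrow> ('g \<Rightarrow> 'g) set) \<Rightarrow> 'g set set" where
  "L_ob S F = {P. F_centric S F P}"

definition is_cat :: "'g set set \<Rightarrow> ('g, 'm) lsys \<Rightarrow> bool" where
  "is_cat Ob L \<longleftrightarrow> (\<forall>P\<in>Ob. \<forall>Q\<in>Ob. \<forall>R\<in>Ob. \<forall>T\<in>Ob.
      L_id L P \<in> L_mor L P P \<and>
      (\<forall>f\<in>L_mor L P Q. L_cmp L P Q Q (L_id L Q) f = f \<and> L_cmp L P P Q f (L_id L P) = f) \<and>
      (\<forall>f\<in>L_mor L P Q. \<forall>g\<in>L_mor L Q R. L_cmp L P Q R g f \<in> L_mor L P R) \<and>
      (\<forall>f\<in>L_mor L P Q. \<forall>g\<in>L_mor L Q R. \<forall>h\<in>L_mor L R T.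
          L_cmp L P R T h (L_cmp L P Q R g f) = L_cmp L P Q T (L_cmp L Q R T h g) f))"

definition linking_system :: "'g monoid \<Rightarrow> ('g set \<Rightarrow> 'g set \<Rightarrow> ('g \<Rightarrow> 'g) set) \<Rightarrow> ('g, 'm) lsys \<Rightarrow> bool" where
  "linking_system S F L \<longleftrightarrow> is_cat (L_ob S F) L \<and>
    (\<forall>P\<in>L_ob S F. \<forall>Q\<in>L_ob S F. \<forall>R\<in>L_ob S F.
      \<comment> \<open>delta is a functor from the transporter category\<close>
      (\<forall>g\<in>transp S P Q. L_dlt L P Q g \<in> L_mor L P Q) \<and>
      L_dlt L P P \<one>\<^bsub>S\<^esub> = L_id L P \<and>
      (\<forall>g\<in>transp S P Q. \<forall>h\<in>transp S Q R.
          L_dlt L P R (h \<otimes>\<^bsub>S\<^esub> g) = L_cmp L P Q R (L_dlt L Q R h) (L_dlt L P Q g)) \<and>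
      \<comment> \<open>pi is a functor to F\<close>
      (\<forall>f\<in>L_mor L P Q. L_prj L P Q f \<in> F P Q) \<and>
      L_prj L P P (L_id L P) = restrict id P \<and>
      (\<forall>f\<in>L_mor L P Q. \<forall>g\<in>L_mor L Q R.
          L_prj L P R (L_cmp L P Q R g f) = restrict (L_prj L Q R g \<circ> L_prj L P Q f) P) \<and>
      \<comment> \<open>(A)\<close>
      (\<forall>f\<in>L_mor L P Q. \<forall>z\<in>P \<inter> cent S P.
          L_cmp L P P Q f (L_dlt L P P z) = f \<longrightarrow> z = \<one>\<^bsub>S\<^esub>) \<and>
      L_prj L P Q ` L_mor L P Q = F P Q \<and>
      (\<forall>f\<in>L_mor L P Q. \<forall>f'\<in>L_mor L P Q.
          L_prj L P Q f = L_prj L P Q f' \<longleftrightarrow> (\<exists>z\<in>P \<inter> cent S P. f' = L_cmp L P P Q f (L_dlt L P P z))) \<and>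
      \<comment> \<open>(B)\<close>
      (\<forall>g\<in>transp S P Q. L_prj L P Q (L_dlt L P Q g) = restrict (conjm S g) P) \<and>
      \<comment> \<open>(C)\<close>
      (\<forall>f\<in>L_mor L P Q. \<forall>g\<in>P.
          L_cmp L P P Q f (L_dlt L P P g) = L_cmp L P Q Q (L_dlt L Q Q (L_prj L P Q f g)) f))"

definition p_local_compact_group :: "nat \<Rightarrow> 'g monoid \<Rightarrow> ('g set \<Rightarrow> 'g set \<Rightarrow> ('g \<Rightarrow> 'g) set) \<Rightarrow> ('g, 'm) lsys \<Rightarrow> bool" where
  "p_local_compact_group p S F L \<longleftrightarrow> discrete_p_toral p S \<and> saturated p S F \<and> linking_system S F L"

section \<open>Self equivalences of L\<close>

type_synonym ('g, 'm) fnctr = "('g set \<Rightarrow> 'g set) \<times> ('g set \<Rightarrow> 'g set \<Rightarrow> 'm \<Rightarrow> 'm)"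

definition L_iso :: "('g, 'm) lsys \<Rightarrow> 'g set \<Rightarrow> 'g set \<Rightarrow> 'm \<Rightarrow> bool" where
  "L_iso L P Q f \<longleftrightarrow> f \<in> L_mor L P Q \<and>
     (\<exists>g\<in>L_mor L Q P. L_cmp L P Q P g f = L_id L P \<and> L_cmp L Q P Q f g = L_id L Q)"

definition is_functor :: "'g set set \<Rightarrow> ('g, 'm) lsys \<Rightarrow> ('g, 'm) fnctr \<Rightarrow> bool" where
  "is_functor Ob L \<Psi> \<longleftrightarrow> (\<forall>P\<in>Ob. fst \<Psi> P \<in> Ob) \<and>
     (\<forall>P\<in>Ob. \<forall>Q\<in>Ob. \<forall>R\<in>Ob.
        snd \<Psi> P P (L_id L P) = L_id L (fst \<Psi> P) \<and>
        (\<forall>f\<in>L_mor L P Q. snd \<Psi> P Q f \<in> L_mor L (fst \<Psi> P) (fst \<Psi> Q)) \<and>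
        (\<forall>f\<in>L_mor L P Q. \<forall>g\<in>L_mor L Q R.
           snd \<Psi> P R (L_cmp L P Q R g f) =
           L_cmp L (fst \<Psi> P) (fst \<Psi> Q) (fst \<Psi> R) (snd \<Psi> Q R g) (snd \<Psi> P Q f)))"

definition self_equivalence :: "'g set set \<Rightarrow> ('g, 'm) lsys \<Rightarrow> ('g, 'm) fnctr \<Rightarrow> bool" where
  "self_equivalence Ob L \<Psi> \<longleftrightarrow> is_functor Ob L \<Psi> \<and>
     (\<forall>P\<in>Ob. \<forall>Q\<in>Ob. bij_betw (snd \<Psi> P Q) (L_mor L P Q) (L_mor L (fst \<Psi> P) (fst \<Psi> Q))) \<and>
     (\<forall>Q\<in>Ob. \<exists>P\<in>Ob. \<exists>f. L_iso L (fst \<Psi> P) Q f)"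

definition AutI_typ :: "'g monoid \<Rightarrow> ('g set \<Rightarrow> 'g set \<Rightarrow> ('g \<Rightarrow> 'g) set) \<Rightarrow> ('g, 'm) lsys \<Rightarrow> ('g, 'm) fnctr set" where
  "AutI_typ S F L = {\<Psi>. self_equivalence (L_ob S F) L \<Psi> \<and>
     \<comment> \<open>isotypical\<close>
     (\<forall>P\<in>L_ob S F. snd \<Psi> P P ` (L_dlt L P P ` P) = L_dlt L (fst \<Psi> P) (fst \<Psi> P) ` (fst \<Psi> P)) \<and>
     \<comment> \<open>sends inclusions to inclusions\<close>
     (\<forall>P\<in>L_ob S F. \<forall>Q\<in>L_ob S F. P \<subseteq> Q \<longrightarrow>
        snd \<Psi> P Q (L_dlt L P Q \<one>\<^bsub>S\<^esub>) = L_dlt L (fst \<Psi> P) (fst \<Psi> Q) \<one>\<^bsub>S\<^esub>)}"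

definition nat_iso :: "'g set set \<Rightarrow> ('g, 'm) lsys \<Rightarrow> ('g, 'm) fnctr \<Rightarrow> ('g, 'm) fnctr \<Rightarrow> bool" where
  "nat_iso Ob L \<Psi> \<Phi> \<longleftrightarrow> (\<exists>\<eta>. (\<forall>P\<in>Ob. L_iso L (fst \<Psi> P) (fst \<Phi> P) (\<eta> P)) \<and>
     (\<forall>P\<in>Ob. \<forall>Q\<in>Ob. \<forall>f\<in>L_mor L P Q.
        L_cmp L (fst \<Psi> P) (fst \<Psi> Q) (fst \<Phi> Q) (\<eta> Q) (snd \<Psi> P Q f) =
        L_cmp L (fst \<Psi> P) (fst \<Phi> P) (fst \<Phi> Q) (snd \<Phi> P Q f) (\<eta> P)))"

definition fcomp :: "('g, 'm) fnctr \<Rightarrow> ('g, 'm) fnctr \<Rightarrow> ('g, 'm) fnctr" where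
  "fcomp \<Psi> \<Phi> = (fst \<Psi> \<circ> fst \<Phi>, (\<lambda>P Q f. snd \<Psi> (fst \<Phi> P) (fst \<Phi> Q) (snd \<Phi> P Q f)))"

definition fid :: "('g, 'm) fnctr" where
  "fid = (id, (\<lambda>P Q f. f))"

definition out_class :: "'g monoid \<Rightarrow> ('g set \<Rightarrow> 'g set \<Rightarrow> ('g \<Rightarrow> 'g) set) \<Rightarrow> ('g, 'm) lsys \<Rightarrow> ('g, 'm) fnctr \<Rightarrow> ('g, 'm) fnctr set" where
  "out_class S F L \<Psi> = {\<Theta>\<in>AutI_typ S F L. nat_iso (L_ob S F) L \<Theta> \<Psi>}"

definition Out_typ :: "'g monoid \<Rightarrow> ('g set \<Rightarrow> 'g set \<Rightarrow> ('g \<Rightarrow> 'g) set) \<Rightarrow> ('g, 'm) lsys \<Rightarrow> ('g, 'm) fnctr set monoid" where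
  "Out_typ S F L = \<lparr> carrier = out_class S F L ` AutI_typ S F L,
     mult = (\<lambda>A B. {\<Theta>\<in>AutI_typ S F L. \<exists>\<Psi>\<in>A. \<exists>\<Phi>\<in>B. nat_iso (L_ob S F) L \<Theta> (fcomp \<Psi> \<Phi>)}),
     one = out_class S F L fid \<rparr>"

text \<open>Morphisms of the fusion subsystem N_F(S) generated by restrictions of elements of
 Aut_F(S) (closure under composition; codomains may be enlarged).\<close>

inductive nfs_hom :: "'g monoid \<Rightarrow> ('g set \<Rightarrow> 'g set \<Rightarrow> ('g \<Rightarrow> 'g) set) \<Rightarrow> 'g set \<Rightarrow> 'g set \<Rightarrow> ('g \<Rightarrow> 'g) \<Rightarrow> bool"
  for S F where
  restr: "\<alpha> \<in> F (carrier S) (carrier S) \<Longrightarrow> subgroup Q S \<Longrightarrow> subgroup R S \<Longrightarrow> \<alpha> ` Q \<subseteq> R \<Longrightarrow>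
            nfs_hom S F Q R (restrict \<alpha> Q)"
| comp: "nfs_hom S F Q R \<phi> \<Longrightarrow> nfs_hom S F R T \<psi> \<Longrightarrow> nfs_hom S F Q T (restrict (\<psi> \<circ> \<phi>) Q)"

definition nfs_conj :: "'g monoid \<Rightarrow> ('g set \<Rightarrow> 'g set \<Rightarrow> ('g \<Rightarrow> 'g) set) \<Rightarrow> 'g set \<Rightarrow> 'g set set" where
  "nfs_conj S F Q = {\<phi> ` Q | \<phi>. nfs_hom S F Q (carrier S) \<phi>}"

definition fusion_controlling_family :: "nat \<Rightarrow> 'g monoid \<Rightarrow> ('g set \<Rightarrow> 'g set \<Rightarrow> ('g \<Rightarrow> 'g) set) \<Rightarrow> (nat \<Rightarrow> 'g set) \<Rightarrow> nat \<Rightarrow> bool" where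
  "fusion_controlling_family p S F P k \<longleftrightarrow> P 0 = carrier S \<and>
     (\<forall>i\<le>k. fully_normalized p S F (P i)) \<and>
     (\<forall>Q. F_centric S F Q \<and> F_radical p S F Q \<longrightarrow> (\<exists>i\<le>k. P i \<in> fconj S F Q))"

definition complete_fcf :: "nat \<Rightarrow> 'g monoid \<Rightarrow> ('g set \<Rightarrow> 'g set \<Rightarrow> ('g \<Rightarrow> 'g) set) \<Rightarrow> (nat \<Rightarrow> 'g set) \<Rightarrow> nat \<Rightarrow> bool" where
  "complete_fcf p S F P k \<longleftrightarrow> fusion_controlling_family p S F P k \<and>
     (\<forall>i\<le>k. F_centric S F (P i) \<and> F_radical p S F (P i)) \<and>
     (\<forall>i\<le>k. \<forall>j\<le>k. P j \<in> nfs_conj S F (P i) \<longrightarrow> i = j) \<and>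
     (\<forall>Q. F_centric S F Q \<and> F_radical p S F Q \<longrightarrow> (\<exists>i\<le>k. P i \<in> nfs_conj S F Q))"

end

theory Submission
  imports Defs "HOL-Algebra.Multiplicative_Group"
begin


locale ctx =
  fixes p :: nat and S :: "'g monoid" (structure) and F :: "'g set \<Rightarrow> 'g set \<Rightarrow> ('g \<Rightarrow> 'g) set"
    and L :: "('g, 'm) lsys"
  assumes plcg: "p_local_compact_group p S F L"
    and fnS: "fully_normalized p S F (carrier S)"
    and cenS: "F_centric S F (carrier S)"
begin

lemma dpt: "discrete_p_toral p S" using plcg by (simp add: p_local_compact_group_def)
lemma grp: "group S" using dpt by (simp add: discrete_p_toral_def)
lemma sat: "saturated p S F" using plcg by (simp add: p_local_compact_group_def)
lemma fus: "fusion_system S F" using sat by (simp add: saturated_def)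
lemma lnk: "linking_system S F L" using plcg by (simp add: p_local_compact_group_def)


lemma sub_pow: "subgroup H S \<Longrightarrow> t \<in> H \<Longrightarrow> t [^] (n::nat) \<in> H"
  by (induction n) (auto simp: subgroup.one_closed subgroup.m_closed)

lemma frac_fix: "0 \<le> a \<Longrightarrow> a < 1 \<Longrightarrow> a = frac (2*a) \<Longrightarrow> a = (0::rat)"
proof -
  assume "0 \<le> a" "a < 1" "a = frac (2*a)"
  then have "2*a - a \<in> \<int>" by (metis frac_unique_iff)
  then have "a \<in> \<int>" by simp
  then show ?thesis using \<open>0 \<le> a\<close> \<open>a < 1\<close> by (metis frac_eq frac_eq_0_iff)
qed

lemma prufer_pow: "x [^]\<^bsub>prufer_torus p r\<^esub> (n::nat) = (\<lambda>i. frac (of_nat n * x i))"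
proof (induction n)
  case 0 then show ?case by (simp add: prufer_torus_def)
next
  case (Suc n)
  then show ?case by (simp add: prufer_torus_def algebra_simps)
qed

lemma prufer_tors:
  assumes "x \<in> carrier (prufer_torus p r)" "prime p"
  shows "\<exists>N>0. x [^]\<^bsub>prufer_torus p r\<^esub> (N::nat) = \<one>\<^bsub>prufer_torus p r\<^esub>"
proof -
  have "\<forall>i<r. \<exists>n::nat. x i * of_nat p ^ n \<in> \<int>" using assms(1) by (simp add: prufer_torus_def)
  then obtain e where e: "\<And>i. i < r \<Longrightarrow> x i * of_nat p ^ e i \<in> \<int>" by metis
  define N where "N = (\<Prod>i<r. p ^ e i)"
  have Npos: "N > 0" using assms(2) unfolding N_def by (simp add: prime_gt_0_nat)
  have "frac (of_nat N * x i) = 0" for i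
  proof (cases "i < r")
    case True
    have "p ^ e i dvd N" unfolding N_def using True by (intro dvd_prodI) auto
    then obtain c where c: "N = p ^ e i * c" by (auto elim: dvdE)
    have "of_nat N * x i = of_nat c * (x i * of_nat p ^ e i)" by (simp add: c algebra_simps)
    also have "\<dots> \<in> \<int>" using e[OF True] Ints_of_nat by (rule Ints_mult[rotated])
    finally show ?thesis by simp
  next
    case False then have "x i = 0" using assms(1) by (simp add: prufer_torus_def)
    then show ?thesis by simp
  qed
  then have "x [^]\<^bsub>prufer_torus p r\<^esub> N = \<one>\<^bsub>prufer_torus p r\<^esub>"
    by (simp only: prufer_pow) (simp add: prufer_torus_def fun_eq_iff)
  then show ?thesis using Npos by blast
qed

lemma tors:
  assumes g: "g \<in> carrier S"
  shows "\<exists>N>0. g [^]\<^bsub>S\<^esub> (N::nat) = \<one>\<^bsub>S\<^esub>"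
proof -
  interpret group S by (rule grp)
  obtain T r where T: "normal T S" "S\<lparr>carrier := T\<rparr> \<cong> prufer_torus p r" "finite (rcosets T)"
    and pr: "prime p"
    using dpt unfolding discrete_p_toral_def by blast
  interpret N: normal T S by (rule T(1))
  obtain \<phi> where phi: "\<phi> \<in> iso (S\<lparr>carrier := T\<rparr>) (prufer_torus p r)" using T(2) unfolding is_iso_def by blast
  have phiT: "\<And>t. t \<in> T \<Longrightarrow> \<phi> t \<in> carrier (prufer_torus p r)"
    using phi by (auto simp: iso_def hom_def)
  have phim: "\<And>a b. a \<in> T \<Longrightarrow> b \<in> T \<Longrightarrow> \<phi> (a \<otimes> b) = \<phi> a \<otimes>\<^bsub>prufer_torus p r\<^esub> \<phi> b"
    using phi by (auto simp: iso_def hom_def)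
  have phiinj: "inj_on \<phi> T" using phi by (auto simp: iso_def bij_betw_def)
  have phipow: "\<And>t n. t \<in> T \<Longrightarrow> \<phi> (t [^] (n::nat)) = \<phi> t [^]\<^bsub>prufer_torus p r\<^esub> n"
  proof -
    fix t and n :: nat assume t: "t \<in> T"
    show "\<phi> (t [^] n) = \<phi> t [^]\<^bsub>prufer_torus p r\<^esub> n"
    proof (induction n)
      case 0
      have "\<phi> \<one> = \<phi> (\<one> \<otimes> \<one>)" by simp
      also have "\<dots> = \<phi> \<one> \<otimes>\<^bsub>prufer_torus p r\<^esub> \<phi> \<one>" by (rule phim) auto
      finally have "\<phi> \<one> = \<phi> \<one> \<otimes>\<^bsub>prufer_torus p r\<^esub> \<phi> \<one>" .
      then have "\<phi> \<one> = (\<lambda>i. frac (\<phi> \<one> i + \<phi> \<one> i))" by (simp add: prufer_torus_def)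
      moreover have "\<phi> \<one> \<in> carrier (prufer_torus p r)" by (rule phiT) auto
      ultimately have "\<phi> \<one> i = 0" for i
        by (cases "i < r") (auto simp: prufer_torus_def fun_eq_iff intro: frac_fix split: if_splits dest!: spec[of _ i])
      then show ?case by (auto simp: prufer_torus_def)
    next
      case (Suc n)
      have "\<phi> (t [^] Suc n) = \<phi> (t [^] n \<otimes> t)" by simp
      also have "\<dots> = \<phi> (t [^] n) \<otimes>\<^bsub>prufer_torus p r\<^esub> \<phi> t"
        using t by (intro phim) (auto intro: N.subgroup_axioms sub_pow)
      finally show ?case using Suc by simp
    qed
  qed
  have torsT: "\<exists>N>0. t [^] (N::nat) = \<one>" if t: "t \<in> T" for t
  proof -
    obtain N where N: "N > 0" "\<phi> t [^]\<^bsub>prufer_torus p r\<^esub> (N::nat) = \<one>\<^bsub>prufer_torus p r\<^esub>"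
      using prufer_tors[OF phiT[OF t] pr] by blast
    have "\<phi> (t [^] N) = \<phi> \<one>" using N phipow[OF t, of N] phipow[OF t, of 0] by simp
    moreover have "t [^] N \<in> T" using t by (auto intro: N.subgroup_axioms sub_pow)
    ultimately have "t [^] N = \<one>" using phiinj N.one_closed by (auto dest: inj_onD)
    then show ?thesis using N by auto
  qed
  interpret Q: group "S Mod T" by (rule N.factorgroup_is_group)
  have "T #> g \<in> carrier (S Mod T)" using g by (auto simp: FactGroup_def RCOSETS_def)
  then have "(T #> g) [^]\<^bsub>S Mod T\<^esub> order (S Mod T) = \<one>\<^bsub>S Mod T\<^esub>" by (rule Q.pow_order_eq_1)
  then have "T #> (g [^] order (S Mod T)) = T" using N.FactGroup_pow[OF g] by (simp add: FactGroup_def)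
  then have gm: "g [^] order (S Mod T) \<in> T" using rcos_self[of "g [^] order (S Mod T)" T] g N.subgroup_axioms by auto
  obtain N where N: "N > 0" "(g [^] order (S Mod T)) [^] (N::nat) = \<one>" using torsT[OF gm] by blast
  have "order (S Mod T) > 0"
  proof -
    have "finite (carrier (S Mod T))" using T(3) by (simp add: FactGroup_def)
    moreover have "carrier (S Mod T) \<noteq> {}" using Q.one_closed by blast
    ultimately show ?thesis by (simp add: order_def card_gt_0_iff)
  qed
  then show ?thesis using N g by (intro exI[of _ "order (S Mod T) * N"]) (simp add: nat_pow_pow)
qed

lemma conjm_closed: "h \<in> carrier S \<Longrightarrow> x \<in> carrier S \<Longrightarrow> conjm S h x \<in> carrier S"
  using grp by (simp add: conjm_def group.inv_closed group.is_monoid monoid.m_closed)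

lemma conjm_mult: "a \<in> carrier S \<Longrightarrow> b \<in> carrier S \<Longrightarrow> x \<in> carrier S \<Longrightarrow>
   conjm S (a \<otimes> b) x = conjm S a (conjm S b x)"
proof -
  interpret group S by (rule grp)
  assume a: "a \<in> carrier S" and b: "b \<in> carrier S" and x: "x \<in> carrier S"
  then show ?thesis by (simp add: conjm_def inv_mult_group m_assoc)
qed

lemma conjm_one: "x \<in> carrier S \<Longrightarrow> conjm S \<one> x = x"
proof -
  interpret group S by (rule grp)
  assume "x \<in> carrier S" then show ?thesis by (simp add: conjm_def)
qed

lemma conjm_inj: "h \<in> carrier S \<Longrightarrow> inj_on (conjm S h) (carrier S)"
proof (rule inj_onI)
  interpret group S by (rule grp)
  fix x y assume h: "h \<in> carrier S" and x: "x \<in> carrier S" and y: "y \<in> carrier S"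
    and e: "conjm S h x = conjm S h y"
  then have "inv h \<otimes> conjm S h x \<otimes> h = inv h \<otimes> conjm S h y \<otimes> h" by simp
  then show "x = y" using h x y by (simp add: conjm_def m_assoc[symmetric])
qed

lemma conjm_inv: "h \<in> carrier S \<Longrightarrow> x \<in> carrier S \<Longrightarrow> conjm S (inv h) (conjm S h x) = x"
proof -
  interpret group S by (rule grp)
  assume "h \<in> carrier S" "x \<in> carrier S" then show ?thesis
    by (simp add: conjm_def m_assoc[symmetric]) (simp add: m_assoc)
qed

lemma conj_pow_strict:
  assumes g: "g \<in> carrier S" and X: "X \<subseteq> carrier S" and st: "conjm S g ` X \<subset> X"
  shows "conjm S (g [^] Suc j) ` X \<subset> X"
proof (induction j)
  case 0 then show ?case using st g grp by (simp add: group.is_monoid monoid.l_one)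
next
  case (Suc j)
  interpret group S by (rule grp)
  have e: "conjm S (g [^] Suc (Suc j)) ` X = conjm S (g [^] Suc j) ` (conjm S g ` X)"
    using X g by (auto simp: image_image conjm_mult[symmetric] simp del: nat_pow_Suc
       intro!: image_cong)
  have "conjm S (g [^] Suc j) ` (conjm S g ` X) \<subset> conjm S (g [^] Suc j) ` X"
    using X st by (intro image_strict_mono[OF inj_on_subset[OF conjm_inj]]) (auto simp: g)
  then show ?case using Suc e by auto
qed

lemma F_basic:
  assumes "subgroup P S" "subgroup Q S" "subgroup R S"
  shows "homS S P Q \<subseteq> F P Q" "F P Q \<subseteq> injhom S P Q"
    "\<phi> \<in> F P Q \<Longrightarrow> \<psi> \<in> F Q R \<Longrightarrow> restrict (\<psi> \<circ> \<phi>) P \<in> F P R"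
    "\<phi> \<in> F P Q \<Longrightarrow> \<phi> \<in> F P (\<phi> ` P) \<and> restrict (inv_into P \<phi>) (\<phi> ` P) \<in> F (\<phi> ` P) P"
  using fus assms unfolding fusion_system_def by blast+

lemma subS: "subgroup (carrier S) S"
  using grp by (simp add: group.subgroup_self)

lemma injhomD:
  assumes "\<phi> \<in> injhom S P Q"
  shows "\<phi> \<in> extensional P" "\<And>x. x \<in> P \<Longrightarrow> \<phi> x \<in> Q" "inj_on \<phi> P"
    "\<And>x y. x \<in> P \<Longrightarrow> y \<in> P \<Longrightarrow> \<phi> (x \<otimes> y) = \<phi> x \<otimes> \<phi> y"
  using assms by (auto simp: injhom_def hom_def)

lemma id_in_F: assumes "subgroup P S" shows "restrict (\<lambda>x. x) P \<in> F P P"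
proof -
  have "restrict (conjm S \<one>) P = restrict (\<lambda>x. x) P"
    using assms conjm_one by (auto simp: subgroup_def restrict_def fun_eq_iff)
  moreover have "\<one> \<in> transp S P P"
    using assms conjm_one by (auto simp: transp_def subgroup_def)
  ultimately show ?thesis using F_basic(1)[OF assms assms assms] unfolding homS_def by force
qed

lemma surjF:
  assumes \<beta>: "\<beta> \<in> F (carrier S) (carrier S)"
  shows "\<beta> ` carrier S = carrier S"
proof (rule ccontr)
  interpret group S by (rule grp)
  let ?S = "carrier S"
  note FB = F_basic[OF subS subS subS]
  have bi: "\<beta> \<in> injhom S ?S ?S" using FB(2) \<beta> by blast
  assume ne: "\<beta> ` ?S \<noteq> ?S"
  have sub: "\<beta> ` ?S \<subset> ?S" using injhomD(2)[OF bi] ne by auto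
  define b where "b n = ((\<lambda>f. restrict (\<beta> \<circ> f) ?S) ^^ n) (restrict (\<lambda>x. x) ?S)" for n
  have b0: "b 0 = restrict (\<lambda>x. x) ?S" and bS: "b (Suc n) = restrict (\<beta> \<circ> b n) ?S" for n
    by (simp_all add: b_def)
  have bF: "b n \<in> F ?S ?S" for n
  proof (induction n)
    case 0 show ?case unfolding b0 by (rule id_in_F[OF subS])
  next
    case (Suc n) show ?case unfolding bS by (rule FB(3)[OF Suc \<beta>])
  qed
  have bim: "b (Suc n) ` ?S = \<beta> ` (b n ` ?S)" for n by (auto simp: bS)
  have bsub: "b n ` ?S \<subseteq> ?S" for n using injhomD(2)[OF FB(2)[THEN subsetD, OF bF]] by blast
  have str: "b (Suc n) ` ?S \<subset> b n ` ?S" for n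
  proof (induction n)
    case 0 then show ?case using sub by (simp add: bim b0)
  next
    case (Suc n)
    have "\<beta> ` (b (Suc n) ` ?S) \<subset> \<beta> ` (b n ` ?S)"
      by (rule image_strict_mono[OF inj_on_subset[OF injhomD(3)[OF bi] bsub] Suc])
    then show ?case by (simp add: bim)
  qed
  have dec: "b m ` ?S \<subset> b n ` ?S" if "n < m" for n m
    using that
  proof (induction m)
    case 0 then show ?case by simp
  next
    case (Suc m)
    then show ?case using str[of m] by (cases "n = m") auto
  qed
  let ?A = "autF_grp S F ?S"
  have fin: "finite (carrier (outF S F ?S))" using sat fnS unfolding saturated_def by blast
  have "(\<lambda>n. inn S ?S #>\<^bsub>?A\<^esub> b n) ` UNIV \<subseteq> carrier (outF S F ?S)"
    using bF by (auto simp: outF_def FactGroup_def RCOSETS_def autF_grp_def)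
  then have "finite (range (\<lambda>n. inn S ?S #>\<^bsub>?A\<^esub> b n))" using fin finite_subset by blast
  then have "\<not> inj (\<lambda>n. inn S ?S #>\<^bsub>?A\<^esub> b n)" using finite_imageD infinite_UNIV_nat by blast
  then obtain n m where nm: "n \<noteq> m" "inn S ?S #>\<^bsub>?A\<^esub> b n = inn S ?S #>\<^bsub>?A\<^esub> b m"
    unfolding inj_def by blast
  have key: "n < m \<Longrightarrow> inn S ?S #>\<^bsub>?A\<^esub> b n = inn S ?S #>\<^bsub>?A\<^esub> b m \<Longrightarrow> False" for n m
  proof -
    assume lt: "n < m" and eq: "inn S ?S #>\<^bsub>?A\<^esub> b n = inn S ?S #>\<^bsub>?A\<^esub> b m"
    have bme: "b m \<in> extensional ?S" using injhomD(1)[OF FB(2)[THEN subsetD, OF bF]] by blast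
    have "restrict (conjm S \<one>) ?S \<in> inn S ?S" unfolding inn_def by blast
    moreover have "restrict (restrict (conjm S \<one>) ?S \<circ> b m) ?S = b m"
      using bme bsub[of m] by (auto simp: fun_eq_iff conjm_one extensional_def)
    ultimately have "b m \<in> inn S ?S #>\<^bsub>?A\<^esub> b m"
      unfolding r_coset_def autF_grp_def
      by (intro UN_I[where a="restrict (conjm S \<one>) ?S"]) simp_all
    then have "b m \<in> inn S ?S #>\<^bsub>?A\<^esub> b n" using eq by simp
    then obtain g where g: "g \<in> ?S" and bm: "b m = restrict (restrict (conjm S g) ?S \<circ> b n) ?S"
      unfolding r_coset_def autF_grp_def inn_def by simp blast
    have "b m ` ?S = conjm S g ` (b n ` ?S)" using bm bsub[of n] by auto
    then have st: "conjm S g ` (b n ` ?S) \<subset> b n ` ?S" using dec[OF lt] by simp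
    obtain N where N: "N > 0" "g [^] (N::nat) = \<one>" using tors[OF g] by blast
    have "conjm S (g [^] Suc (N - 1)) ` (b n ` ?S) \<subset> b n ` ?S"
      by (rule conj_pow_strict[OF g bsub st])
    then have "conjm S \<one> ` (b n ` ?S) \<subset> b n ` ?S" using N by simp
    moreover have "conjm S \<one> ` (b n ` ?S) = b n ` ?S" using bsub[of n] conjm_one
    proof -
      have "conjm S \<one> ` (b n ` ?S) = (\<lambda>x. x) ` (b n ` ?S)"
        using bsub[of n] conjm_one by (intro image_cong) auto
      then show ?thesis by simp
    qed
    ultimately show False by simp
  qed
  show False using nm key[of n m] key[of m n] by (cases "n < m") auto
qed

abbreviation "Ob \<equiv> L_ob S F"

lemma Ob_sub: "P \<in> Ob \<Longrightarrow> subgroup P S"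
  by (simp add: L_ob_def F_centric_def)
lemma Ob_cent: "P \<in> Ob \<Longrightarrow> Q \<in> fconj S F P \<Longrightarrow> cent S Q \<subseteq> Q"
  by (simp add: L_ob_def F_centric_def)
lemma S_Ob: "carrier S \<in> Ob" using cenS by (simp add: L_ob_def)
lemma Ob_subset: "P \<in> Ob \<Longrightarrow> P \<subseteq> carrier S" using Ob_sub subgroup.subset by blast

lemma cat: "is_cat Ob L" using lnk by (simp add: linking_system_def)

lemma cat_id: "P \<in> Ob \<Longrightarrow> L_id L P \<in> L_mor L P P"
  using cat unfolding is_cat_def by blast
lemma cat_idl: "P \<in> Ob \<Longrightarrow> Q \<in> Ob \<Longrightarrow> f \<in> L_mor L P Q \<Longrightarrow> L_cmp L P Q Q (L_id L Q) f = f"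
  using cat unfolding is_cat_def by blast
lemma cat_idr: "P \<in> Ob \<Longrightarrow> Q \<in> Ob \<Longrightarrow> f \<in> L_mor L P Q \<Longrightarrow> L_cmp L P P Q f (L_id L P) = f"
  using cat unfolding is_cat_def by blast
lemma cat_cmp: "P \<in> Ob \<Longrightarrow> Q \<in> Ob \<Longrightarrow> R \<in> Ob \<Longrightarrow> f \<in> L_mor L P Q \<Longrightarrow> g \<in> L_mor L Q R \<Longrightarrow>
   L_cmp L P Q R g f \<in> L_mor L P R"
  using cat unfolding is_cat_def by blast
lemma cat_assoc: "P \<in> Ob \<Longrightarrow> Q \<in> Ob \<Longrightarrow> R \<in> Ob \<Longrightarrow> T \<in> Ob \<Longrightarrow> f \<in> L_mor L P Q \<Longrightarrow>
   g \<in> L_mor L Q R \<Longrightarrow> h \<in> L_mor L R T \<Longrightarrow>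
   L_cmp L P R T h (L_cmp L P Q R g f) = L_cmp L P Q T (L_cmp L Q R T h g) f"
  using cat unfolding is_cat_def by blast

context
  fixes P Q R assumes PQR: "P \<in> Ob" "Q \<in> Ob" "R \<in> Ob"
begin
lemma LS: "(\<forall>g\<in>transp S P Q. L_dlt L P Q g \<in> L_mor L P Q) \<and>
      L_dlt L P P \<one> = L_id L P \<and>
      (\<forall>g\<in>transp S P Q. \<forall>h\<in>transp S Q R.
          L_dlt L P R (h \<otimes> g) = L_cmp L P Q R (L_dlt L Q R h) (L_dlt L P Q g)) \<and>
      (\<forall>f\<in>L_mor L P Q. L_prj L P Q f \<in> F P Q) \<and>
      L_prj L P P (L_id L P) = restrict id P \<and>
      (\<forall>f\<in>L_mor L P Q. \<forall>g\<in>L_mor L Q R.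
          L_prj L P R (L_cmp L P Q R g f) = restrict (L_prj L Q R g \<circ> L_prj L P Q f) P) \<and>
      (\<forall>f\<in>L_mor L P Q. \<forall>z\<in>P \<inter> cent S P.
          L_cmp L P P Q f (L_dlt L P P z) = f \<longrightarrow> z = \<one>) \<and>
      L_prj L P Q ` L_mor L P Q = F P Q \<and>
      (\<forall>f\<in>L_mor L P Q. \<forall>f'\<in>L_mor L P Q.
          L_prj L P Q f = L_prj L P Q f' \<longleftrightarrow> (\<exists>z\<in>P \<inter> cent S P. f' = L_cmp L P P Q f (L_dlt L P P z))) \<and>
      (\<forall>g\<in>transp S P Q. L_prj L P Q (L_dlt L P Q g) = restrict (conjm S g) P) \<and>
      (\<forall>f\<in>L_mor L P Q. \<forall>g\<in>P.
          L_cmp L P P Q f (L_dlt L P P g) = L_cmp L P Q Q (L_dlt L Q Q (L_prj L P Q f g)) f)"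
  by (rule lnk[unfolded linking_system_def, THEN conjunct2, THEN bspec, THEN bspec, THEN bspec, OF PQR(1) PQR(2) PQR(3)])

lemma dlt_mor: "g \<in> transp S P Q \<Longrightarrow> L_dlt L P Q g \<in> L_mor L P Q" using LS[THEN conjunct1] by blast
lemma dlt_cmp: "g \<in> transp S P Q \<Longrightarrow> h \<in> transp S Q R \<Longrightarrow>
   L_dlt L P R (h \<otimes> g) = L_cmp L P Q R (L_dlt L Q R h) (L_dlt L P Q g)" using LS[THEN conjunct2, THEN conjunct2, THEN conjunct1] by blast
lemma prj_F: "f \<in> L_mor L P Q \<Longrightarrow> L_prj L P Q f \<in> F P Q" using LS[THEN conjunct2, THEN conjunct2, THEN conjunct2, THEN conjunct1] by blast
lemma prj_cmp: "f \<in> L_mor L P Q \<Longrightarrow> g \<in> L_mor L Q R \<Longrightarrow>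
   L_prj L P R (L_cmp L P Q R g f) = restrict (L_prj L Q R g \<circ> L_prj L P Q f) P" using LS[THEN conjunct2, THEN conjunct2, THEN conjunct2, THEN conjunct2, THEN conjunct2, THEN conjunct1] by blast
lemma axA: "f \<in> L_mor L P Q \<Longrightarrow> z \<in> P \<Longrightarrow> z \<in> cent S P \<Longrightarrow>
   L_cmp L P P Q f (L_dlt L P P z) = f \<Longrightarrow> z = \<one>" using LS[THEN conjunct2, THEN conjunct2, THEN conjunct2, THEN conjunct2, THEN conjunct2, THEN conjunct2, THEN conjunct1] by blast
lemma prj_surj: "L_prj L P Q ` L_mor L P Q = F P Q" using LS[THEN conjunct2, THEN conjunct2, THEN conjunct2, THEN conjunct2, THEN conjunct2, THEN conjunct2, THEN conjunct2, THEN conjunct1] by blast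
lemma axB: "g \<in> transp S P Q \<Longrightarrow> L_prj L P Q (L_dlt L P Q g) = restrict (conjm S g) P" using LS[THEN conjunct2, THEN conjunct2, THEN conjunct2, THEN conjunct2, THEN conjunct2, THEN conjunct2, THEN conjunct2, THEN conjunct2, THEN conjunct2, THEN conjunct1] by blast
lemma axC: "f \<in> L_mor L P Q \<Longrightarrow> g \<in> P \<Longrightarrow>
   L_cmp L P P Q f (L_dlt L P P g) = L_cmp L P Q Q (L_dlt L Q Q (L_prj L P Q f g)) f" using LS[THEN conjunct2, THEN conjunct2, THEN conjunct2, THEN conjunct2, THEN conjunct2, THEN conjunct2, THEN conjunct2, THEN conjunct2, THEN conjunct2, THEN conjunct2] by blast
lemma dlt_one: "L_dlt L P P \<one> = L_id L P" using LS[THEN conjunct2, THEN conjunct1] by blast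
lemma prj_id: "L_prj L P P (L_id L P) = restrict id P" using LS[THEN conjunct2, THEN conjunct2, THEN conjunct2, THEN conjunct2, THEN conjunct1] by blast
end


lemma conj_one_img: "X \<subseteq> carrier S \<Longrightarrow> conjm S \<one> ` X = X"
proof -
  assume X: "X \<subseteq> carrier S"
  have "conjm S \<one> ` X = (\<lambda>x. x) ` X" using X conjm_one by (intro image_cong) auto
  then show ?thesis by simp
qed

lemma transp_one: "subgroup P S \<Longrightarrow> P \<subseteq> Q \<Longrightarrow> \<one> \<in> transp S P Q"
  using conj_one_img[OF subgroup.subset] by (auto simp: transp_def subgroup_def)
lemma transp_S: "P \<subseteq> carrier S \<Longrightarrow> g \<in> carrier S \<Longrightarrow> g \<in> transp S P (carrier S)"
  using conjm_closed by (auto simp: transp_def)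
lemma transp_in: "subgroup P S \<Longrightarrow> g \<in> P \<Longrightarrow> g \<in> transp S P P"
  by (auto simp: transp_def conjm_def subgroup_def)

lemma self_fconj: assumes "subgroup P S" shows "P \<in> fconj S F P"
proof -
  have "restrict (conjm S \<one>) P \<in> F P (carrier S)"
    using F_basic(1)[OF assms subS subS] transp_one[OF assms] subgroup.subset[OF assms]
    unfolding homS_def by blast
  moreover have "restrict (conjm S \<one>) P ` P = P" using conj_one_img[OF subgroup.subset[OF assms]] by simp
  ultimately show ?thesis unfolding fconj_def by (metis (mono_tags, lifting) mem_Collect_eq)
qed

lemma Ob_cent_self: "P \<in> Ob \<Longrightarrow> cent S P \<subseteq> P"
  using Ob_cent self_fconj Ob_sub by blast

lemma dlt_inj:
  assumes Q: "Q \<in> Ob" and R: "R \<in> Ob" and a: "a \<in> transp S Q R" and b: "b \<in> transp S Q R"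
    and e: "L_dlt L Q R a = L_dlt L Q R b"
  shows "a = b"
proof -
  interpret group S by (rule grp)
  have aS: "a \<in> carrier S" and bS: "b \<in> carrier S" using a b by (auto simp: transp_def)
  have QS: "Q \<subseteq> carrier S" using Ob_subset[OF Q] .
  have "restrict (conjm S a) Q = restrict (conjm S b) Q"
    using axB[OF Q R R a] axB[OF Q R R b] e by simp
  then have cj: "conjm S a x = conjm S b x" if "x \<in> Q" for x using that by (metis restrict_apply')
  define z where "z = inv b \<otimes> a"
  have zS: "z \<in> carrier S" using aS bS by (simp add: z_def)
  have "z \<otimes> x = x \<otimes> z" if x: "x \<in> Q" for x
  proof -
    have xS: "x \<in> carrier S" using x QS by auto
    have "a \<otimes> x \<otimes> inv a = b \<otimes> x \<otimes> inv b" using cj[OF x] by (simp add: conjm_def)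
    then have e1: "inv b \<otimes> (a \<otimes> x \<otimes> inv a) \<otimes> a = inv b \<otimes> (b \<otimes> x \<otimes> inv b) \<otimes> a" by simp
    have l: "inv b \<otimes> (a \<otimes> x \<otimes> inv a) \<otimes> a = z \<otimes> x" using aS bS xS by (simp add: z_def m_assoc)
    have r: "inv b \<otimes> (b \<otimes> x \<otimes> inv b) \<otimes> a = x \<otimes> z" using aS bS xS by (simp add: z_def m_assoc[symmetric])
    show ?thesis using e1 l r by simp
  qed
  then have zc: "z \<in> cent S Q" using zS by (auto simp: cent_def)
  then have zQ: "z \<in> Q" using Ob_cent_self[OF Q] by blast
  have bz: "b \<otimes> z = a" using aS bS by (simp add: z_def m_assoc[symmetric])
  have "L_dlt L Q R (b \<otimes> z) = L_cmp L Q Q R (L_dlt L Q R b) (L_dlt L Q Q z)"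
    by (rule dlt_cmp[OF Q Q R transp_in[OF Ob_sub[OF Q] zQ] b])
  then have "L_cmp L Q Q R (L_dlt L Q R b) (L_dlt L Q Q z) = L_dlt L Q R b" using bz e by simp
  then have "z = \<one>" by (rule axA[OF Q R R dlt_mor[OF Q R R b] zQ zc])
  then show ?thesis using bz bS by simp
qed

lemma injhom_one: assumes "\<phi> \<in> injhom S P Q" "subgroup P S" "subgroup Q S" shows "\<phi> \<one> = \<one>"
proof -
  interpret group S by (rule grp)
  have o: "\<one> \<in> P" using assms(2) subgroup.one_closed by blast
  have "\<phi> \<one> \<in> carrier S" using injhomD(2)[OF assms(1) o] subgroup.subset[OF assms(3)] by blast
  moreover have "\<phi> \<one> = \<phi> \<one> \<otimes> \<phi> \<one>" using injhomD(4)[OF assms(1) o o] by simp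
  ultimately show ?thesis by (metis l_one one_closed right_cancel)
qed

lemma F_toS: assumes P: "subgroup P S" and Q: "subgroup Q S" and \<psi>: "\<psi> \<in> F P Q"
  shows "\<psi> \<in> F P (carrier S)"
proof -
  have QS: "Q \<subseteq> carrier S" using subgroup.subset[OF Q] .
  have "restrict (conjm S \<one>) Q \<in> F Q (carrier S)"
    using F_basic(1)[OF Q subS subS] transp_one[OF Q QS] unfolding homS_def by blast
  then have "restrict (restrict (conjm S \<one>) Q \<circ> \<psi>) P \<in> F P (carrier S)"
    using F_basic(3)[OF P Q subS \<psi>] by blast
  moreover have "restrict (restrict (conjm S \<one>) Q \<circ> \<psi>) P = \<psi>"
  proof
    fix x show "restrict (restrict (conjm S \<one>) Q \<circ> \<psi>) P x = \<psi> x"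
      using injhomD[OF F_basic(2)[OF P Q Q, THEN subsetD, OF \<psi>]] QS conjm_one
      by (cases "x \<in> P") (auto simp: extensional_def subset_iff)
  qed
  ultimately show ?thesis by simp
qed

lemma cancel:
  assumes X: "X \<in> Ob" and Y: "Y \<in> Ob" and f: "f \<in> L_mor L X Y" and u: "u \<in> Y" and v: "v \<in> Y"
    and e: "L_cmp L X Y Y (L_dlt L Y Y u) f = L_cmp L X Y Y (L_dlt L Y Y v) f"
  shows "u = v"
proof -
  interpret group S by (rule grp)
  have Xs: "subgroup X S" and Ys: "subgroup Y S" using Ob_sub X Y by auto
  have YS: "Y \<subseteq> carrier S" using Ob_subset Y by blast
  have XS: "X \<subseteq> carrier S" using Ob_subset X by blast
  define \<psi> where "\<psi> = L_prj L X Y f"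
  have \<psi>F: "\<psi> \<in> F X Y" using prj_F[OF X Y Y f] by (simp add: \<psi>_def)
  have \<psi>i: "\<psi> \<in> injhom S X Y" using F_basic(2)[OF Xs Ys Ys] \<psi>F by blast
  have uS: "u \<in> carrier S" and vS: "v \<in> carrier S" using u v YS by auto
  have pu: "L_prj L X Y (L_cmp L X Y Y (L_dlt L Y Y a) f) = restrict (restrict (conjm S a) Y \<circ> \<psi>) X"
    if "a \<in> Y" for a
    using prj_cmp[OF X Y Y f dlt_mor[OF Y Y Y transp_in[OF Ys that]]] axB[OF Y Y Y transp_in[OF Ys that]]
    by (simp add: \<psi>_def)
  have cj: "conjm S u (\<psi> x) = conjm S v (\<psi> x)" if x: "x \<in> X" for x
  proof -
    have "restrict (restrict (conjm S u) Y \<circ> \<psi>) X x = restrict (restrict (conjm S v) Y \<circ> \<psi>) X x"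
      using pu[OF u] pu[OF v] e by simp
    then show ?thesis using x injhomD(2)[OF \<psi>i x] by simp
  qed
  define z where "z = inv v \<otimes> u"
  have zY: "z \<in> Y" using u v Ys by (simp add: z_def subgroup.m_closed subgroup.m_inv_closed)
  have zS: "z \<in> carrier S" using zY YS by auto
  have zc: "z \<otimes> y = y \<otimes> z" if y: "y \<in> \<psi> ` X" for y
  proof -
    obtain x where x: "x \<in> X" and yx: "y = \<psi> x" using y by blast
    have yS: "y \<in> carrier S" using injhomD(2)[OF \<psi>i x] YS yx by auto
    have "u \<otimes> y \<otimes> inv u = v \<otimes> y \<otimes> inv v" using cj[OF x] yx by (simp add: conjm_def)
    then have e1: "inv v \<otimes> (u \<otimes> y \<otimes> inv u) \<otimes> u = inv v \<otimes> (v \<otimes> y \<otimes> inv v) \<otimes> u" by simp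
    have l: "inv v \<otimes> (u \<otimes> y \<otimes> inv u) \<otimes> u = z \<otimes> y" using uS vS yS by (simp add: z_def m_assoc)
    have r: "inv v \<otimes> (v \<otimes> y \<otimes> inv v) \<otimes> u = y \<otimes> z" using uS vS yS by (simp add: z_def m_assoc[symmetric])
    show ?thesis using e1 l r by simp
  qed
  have vz: "v \<otimes> z = u" using uS vS by (simp add: z_def m_assoc[symmetric])
  have tz: "z \<in> transp S Y Y" and tv: "v \<in> transp S Y Y" and tiv: "inv v \<in> transp S Y Y"
    using transp_in[OF Ys] zY v Ys by (auto simp: subgroup.m_inv_closed)
  have du: "L_dlt L Y Y u = L_cmp L Y Y Y (L_dlt L Y Y v) (L_dlt L Y Y z)"
    using dlt_cmp[OF Y Y Y tz tv] vz by simp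
  have mz: "L_dlt L Y Y z \<in> L_mor L Y Y" and mv: "L_dlt L Y Y v \<in> L_mor L Y Y"
    and miv: "L_dlt L Y Y (inv v) \<in> L_mor L Y Y"
    using dlt_mor[OF Y Y Y] tz tv tiv by auto
  have zf: "L_cmp L X Y Y (L_dlt L Y Y z) f \<in> L_mor L X Y" by (rule cat_cmp[OF X Y Y f mz])
  have "L_cmp L X Y Y (L_dlt L Y Y v) (L_cmp L X Y Y (L_dlt L Y Y z) f) = L_cmp L X Y Y (L_dlt L Y Y v) f"
    using e du cat_assoc[OF X Y Y Y f mz mv] by simp
  then have "L_cmp L X Y Y (L_dlt L Y Y (inv v)) (L_cmp L X Y Y (L_dlt L Y Y v) (L_cmp L X Y Y (L_dlt L Y Y z) f))
     = L_cmp L X Y Y (L_dlt L Y Y (inv v)) (L_cmp L X Y Y (L_dlt L Y Y v) f)" by simp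
  moreover have "L_cmp L X Y Y (L_dlt L Y Y (inv v)) (L_cmp L X Y Y (L_dlt L Y Y v) h) = h"
    if h: "h \<in> L_mor L X Y" for h
  proof -
    have "L_cmp L X Y Y (L_dlt L Y Y (inv v)) (L_cmp L X Y Y (L_dlt L Y Y v) h)
       = L_cmp L X Y Y (L_cmp L Y Y Y (L_dlt L Y Y (inv v)) (L_dlt L Y Y v)) h"
      using cat_assoc[OF X Y Y Y h mv miv] by simp
    also have "L_cmp L Y Y Y (L_dlt L Y Y (inv v)) (L_dlt L Y Y v) = L_dlt L Y Y (inv v \<otimes> v)"
      using dlt_cmp[OF Y Y Y tv tiv] by simp
    also have "inv v \<otimes> v = \<one>" using vS by simp
    also have "L_dlt L Y Y \<one> = L_id L Y" by (rule dlt_one[OF Y Y Y])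
    finally show ?thesis using cat_idl[OF X Y h] by simp
  qed
  ultimately have zf_eq: "L_cmp L X Y Y (L_dlt L Y Y z) f = f" using zf f by simp
  have \<psi>S: "\<psi> \<in> F X (carrier S)" by (rule F_toS[OF Xs Ys \<psi>F])
  have "\<psi> ` X \<in> fconj S F X" using \<psi>S unfolding fconj_def by blast
  then have cs: "cent S (\<psi> ` X) \<subseteq> \<psi> ` X" by (rule Ob_cent[OF X])
  have "z \<in> cent S (\<psi> ` X)" using zS zc by (auto simp: cent_def)
  then obtain w where w: "w \<in> X" and zw: "z = \<psi> w" using cs by blast
  have wS: "w \<in> carrier S" using w XS by auto
  have wc: "w \<in> cent S X"
  proof -
    have "w \<otimes> x = x \<otimes> w" if x: "x \<in> X" for x
    proof -
      have "\<psi> (w \<otimes> x) = \<psi> (x \<otimes> w)"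
        using injhomD(4)[OF \<psi>i w x] injhomD(4)[OF \<psi>i x w] zc[of "\<psi> x"] zw x by auto
      moreover have "w \<otimes> x \<in> X" "x \<otimes> w \<in> X" using w x Xs by (auto simp: subgroup.m_closed)
      ultimately show ?thesis using injhomD(3)[OF \<psi>i] by (auto dest: inj_onD)
    qed
    then show ?thesis using wS by (auto simp: cent_def)
  qed
  have "L_cmp L X X Y f (L_dlt L X X w) = L_cmp L X Y Y (L_dlt L Y Y (\<psi> w)) f"
    using axC[OF X Y Y f w] by (simp add: \<psi>_def)
  also have "\<dots> = f" using zf_eq zw by simp
  finally have "w = \<one>" by (rule axA[OF X Y Y f w wc])
  then have "z = \<one>" using zw injhom_one[OF \<psi>i Xs Ys] by simp
  then show ?thesis using vz vS by simp
qed

end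



locale eqv = ctx p S F L for p and S :: "'g monoid" (structure) and F and L :: "('g, 'm) lsys" +
  fixes \<Psi> :: "('g, 'm) fnctr"
  assumes PsiA: "\<Psi> \<in> AutI_typ S F L"
begin

abbreviation "Po \<equiv> fst \<Psi>"
abbreviation "Pm \<equiv> snd \<Psi>"

lemma se: "self_equivalence Ob L \<Psi>" using PsiA by (simp add: AutI_typ_def)
lemma fct: "is_functor Ob L \<Psi>" using se by (simp add: self_equivalence_def)
lemma Po_Ob: "P \<in> Ob \<Longrightarrow> Po P \<in> Ob" using fct by (simp add: is_functor_def)

context fixes P Q R assumes PQR: "P \<in> Ob" "Q \<in> Ob" "R \<in> Ob"
begin
lemma FL: "Pm P P (L_id L P) = L_id L (Po P) \<and>
        (\<forall>f\<in>L_mor L P Q. Pm P Q f \<in> L_mor L (Po P) (Po Q)) \<and>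
        (\<forall>f\<in>L_mor L P Q. \<forall>g\<in>L_mor L Q R.
           Pm P R (L_cmp L P Q R g f) =
           L_cmp L (Po P) (Po Q) (Po R) (Pm Q R g) (Pm P Q f))"
  by (rule fct[unfolded is_functor_def, THEN conjunct2, THEN bspec, THEN bspec, THEN bspec, OF PQR(1) PQR(2) PQR(3)])
lemma Pm_id: "Pm P P (L_id L P) = L_id L (Po P)" using FL[THEN conjunct1] by blast
lemma Pm_mor: "f \<in> L_mor L P Q \<Longrightarrow> Pm P Q f \<in> L_mor L (Po P) (Po Q)" using FL[THEN conjunct2, THEN conjunct1] by blast
lemma Pm_cmp: "f \<in> L_mor L P Q \<Longrightarrow> g \<in> L_mor L Q R \<Longrightarrow>
   Pm P R (L_cmp L P Q R g f) = L_cmp L (Po P) (Po Q) (Po R) (Pm Q R g) (Pm P Q f)"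
  using FL[THEN conjunct2, THEN conjunct2] by blast
end

lemma Pm_bij: "P \<in> Ob \<Longrightarrow> Q \<in> Ob \<Longrightarrow> bij_betw (Pm P Q) (L_mor L P Q) (L_mor L (Po P) (Po Q))"
  using se unfolding self_equivalence_def by blast
lemma ess: "Q \<in> Ob \<Longrightarrow> \<exists>P\<in>Ob. \<exists>f. L_iso L (Po P) Q f"
  using se unfolding self_equivalence_def by blast
lemma isot: "P \<in> Ob \<Longrightarrow> Pm P P ` (L_dlt L P P ` P) = L_dlt L (Po P) (Po P) ` (Po P)"
  using PsiA unfolding AutI_typ_def by blast
lemma incl: "P \<in> Ob \<Longrightarrow> Q \<in> Ob \<Longrightarrow> P \<subseteq> Q \<Longrightarrow>
   Pm P Q (L_dlt L P Q \<one>) = L_dlt L (Po P) (Po Q) \<one>"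
  using PsiA unfolding AutI_typ_def by blast

lemma PoS: "Po (carrier S) = carrier S"
proof -
  let ?S = "carrier S"
  obtain P f where P: "P \<in> Ob" and iso: "L_iso L (Po P) ?S f" using ess[OF S_Ob] by blast
  obtain g where g: "g \<in> L_mor L ?S (Po P)" using iso unfolding L_iso_def by blast
  have PP: "Po P \<in> Ob" and PS: "Po ?S \<in> Ob" using Po_Ob P S_Ob by auto
  have i: "L_dlt L P ?S \<one> \<in> L_mor L P ?S"
    by (rule dlt_mor[OF P S_Ob S_Ob transp_one[OF Ob_sub[OF P] Ob_subset[OF P]]])
  have e: "L_cmp L ?S (Po P) (Po ?S) (Pm P ?S (L_dlt L P ?S \<one>)) g \<in> L_mor L ?S (Po ?S)"
    by (rule cat_cmp[OF S_Ob PP PS g Pm_mor[OF P S_Ob S_Ob i]])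
  have \<phi>: "L_prj L ?S (Po ?S) (L_cmp L ?S (Po P) (Po ?S) (Pm P ?S (L_dlt L P ?S \<one>)) g) \<in> F ?S (Po ?S)"
    by (rule prj_F[OF S_Ob PS PS e])
  then have "L_prj L ?S (Po ?S) (L_cmp L ?S (Po P) (Po ?S) (Pm P ?S (L_dlt L P ?S \<one>)) g) \<in> F ?S ?S"
    by (rule F_toS[OF subS Ob_sub[OF PS]])
  then have "?S = L_prj L ?S (Po ?S) (L_cmp L ?S (Po P) (Po ?S) (Pm P ?S (L_dlt L P ?S \<one>)) g) ` ?S"
    using surjF by simp
  also have "\<dots> \<subseteq> Po ?S"
    using injhomD(2)[OF F_basic(2)[OF subS Ob_sub[OF PS] Ob_sub[OF PS], THEN subsetD, OF \<phi>]] by blast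
  finally show ?thesis using Ob_subset[OF PS] by blast
qed

definition al :: "'g \<Rightarrow> 'g" where
  "al g = (THE h. h \<in> carrier S \<and> Pm (carrier S) (carrier S) (L_dlt L (carrier S) (carrier S) g) = L_dlt L (carrier S) (carrier S) h)"

lemma tS: "g \<in> carrier S \<Longrightarrow> g \<in> transp S (carrier S) (carrier S)"
  by (rule transp_S) auto

lemma al: assumes g: "g \<in> carrier S"
  shows "al g \<in> carrier S \<and> Pm (carrier S) (carrier S) (L_dlt L (carrier S) (carrier S) g) = L_dlt L (carrier S) (carrier S) (al g)"
proof -
  let ?S = "carrier S"
  have "Pm ?S ?S (L_dlt L ?S ?S g) \<in> L_dlt L ?S ?S ` ?S"
    using isot[OF S_Ob] PoS g by (metis image_eqI)
  then obtain h where h: "h \<in> ?S" "Pm ?S ?S (L_dlt L ?S ?S g) = L_dlt L ?S ?S h" by blast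
  have u: "h' = h" if "h' \<in> ?S \<and> Pm ?S ?S (L_dlt L ?S ?S g) = L_dlt L ?S ?S h'" for h'
    using dlt_inj[OF S_Ob S_Ob tS tS, of h' h] that h by auto
  have "al g = h" unfolding al_def using h u by (intro the_equality) auto
  then show ?thesis using h by simp
qed

lemma alS: "g \<in> carrier S \<Longrightarrow> al g \<in> carrier S" using al by blast

lemma eqB: assumes P: "P \<in> Ob" and g: "g \<in> P"
  shows "Pm P P (L_dlt L P P g) = L_dlt L (Po P) (Po P) (al g) \<and> al g \<in> Po P"
proof -
  interpret group S by (rule grp)
  let ?S = "carrier S"
  have PS: "P \<subseteq> ?S" using Ob_subset[OF P] .
  have gS: "g \<in> ?S" using g PS by auto
  have PP: "Po P \<in> Ob" using Po_Ob[OF P] .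
  have PPS: "Po P \<subseteq> ?S" using Ob_subset[OF PP] .
  obtain h where h: "h \<in> Po P" "Pm P P (L_dlt L P P g) = L_dlt L (Po P) (Po P) h"
    using isot[OF P] g by blast
  have hS: "h \<in> ?S" using h PPS by auto
  have t1: "\<one> \<in> transp S P ?S" by (rule transp_one[OF Ob_sub[OF P] PS])
  have tg: "g \<in> transp S P P" by (rule transp_in[OF Ob_sub[OF P] g])
  have i: "L_dlt L P ?S \<one> \<in> L_mor L P ?S" by (rule dlt_mor[OF P S_Ob S_Ob t1])
  have dg: "L_dlt L ?S ?S g \<in> L_mor L ?S ?S" by (rule dlt_mor[OF S_Ob S_Ob S_Ob tS[OF gS]])
  have dgP: "L_dlt L P P g \<in> L_mor L P P" by (rule dlt_mor[OF P P P tg])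
  have "L_cmp L P ?S ?S (L_dlt L ?S ?S g) (L_dlt L P ?S \<one>) = L_dlt L P ?S (g \<otimes> \<one>)"
    using dlt_cmp[OF P S_Ob S_Ob t1 tS[OF gS]] by simp
  also have "\<dots> = L_dlt L P ?S (\<one> \<otimes> g)" using gS by simp
  also have "\<dots> = L_cmp L P P ?S (L_dlt L P ?S \<one>) (L_dlt L P P g)"
    using dlt_cmp[OF P P S_Ob tg t1] by simp
  finally have e: "L_cmp L P ?S ?S (L_dlt L ?S ?S g) (L_dlt L P ?S \<one>) = L_cmp L P P ?S (L_dlt L P ?S \<one>) (L_dlt L P P g)" .
  have i': "Pm P ?S (L_dlt L P ?S \<one>) = L_dlt L (Po P) ?S \<one>"
    using incl[OF P S_Ob PS] PoS by simp
  have "Pm P ?S (L_cmp L P ?S ?S (L_dlt L ?S ?S g) (L_dlt L P ?S \<one>))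
     = L_cmp L (Po P) ?S ?S (L_dlt L ?S ?S (al g)) (L_dlt L (Po P) ?S \<one>)"
    using Pm_cmp[OF P S_Ob S_Ob i dg] PoS al[OF gS] i' by simp
  also have "\<dots> = L_dlt L (Po P) ?S (al g \<otimes> \<one>)"
    using dlt_cmp[OF PP S_Ob S_Ob transp_one[OF Ob_sub[OF PP] PPS] tS[OF alS[OF gS]]] by simp
  finally have l: "Pm P ?S (L_cmp L P ?S ?S (L_dlt L ?S ?S g) (L_dlt L P ?S \<one>)) = L_dlt L (Po P) ?S (al g)"
    using alS[OF gS] by simp
  have "Pm P ?S (L_cmp L P P ?S (L_dlt L P ?S \<one>) (L_dlt L P P g))
     = L_cmp L (Po P) (Po P) ?S (L_dlt L (Po P) ?S \<one>) (L_dlt L (Po P) (Po P) h)"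
    using Pm_cmp[OF P P S_Ob dgP i] PoS h i' by simp
  also have "\<dots> = L_dlt L (Po P) ?S (\<one> \<otimes> h)"
    using dlt_cmp[OF PP PP S_Ob transp_in[OF Ob_sub[OF PP] h(1)] transp_one[OF Ob_sub[OF PP] PPS]] by simp
  finally have r: "Pm P ?S (L_cmp L P P ?S (L_dlt L P ?S \<one>) (L_dlt L P P g)) = L_dlt L (Po P) ?S h"
    using hS by simp
  have "al g = h"
    by (rule dlt_inj[OF PP S_Ob transp_S[OF PPS alS[OF gS]] transp_S[OF PPS hS]]) (use l r e in simp)
  then show ?thesis using h by simp
qed

lemma Po_img: assumes P: "P \<in> Ob" shows "Po P = al ` P"
proof
  show "al ` P \<subseteq> Po P" using eqB[OF P] by blast
  show "Po P \<subseteq> al ` P"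
  proof
    fix y assume y: "y \<in> Po P"
    have PP: "Po P \<in> Ob" using Po_Ob[OF P] .
    have "L_dlt L (Po P) (Po P) y \<in> Pm P P ` (L_dlt L P P ` P)" using isot[OF P] y by blast
    then obtain g where g: "g \<in> P" "L_dlt L (Po P) (Po P) y = Pm P P (L_dlt L P P g)" by blast
    then have "L_dlt L (Po P) (Po P) y = L_dlt L (Po P) (Po P) (al g)" and ag: "al g \<in> Po P"
      using eqB[OF P g(1)] by auto
    then have "y = al g"
      using dlt_inj[OF PP PP transp_in[OF Ob_sub[OF PP] y] transp_in[OF Ob_sub[OF PP] ag]] by blast
    then show "y \<in> al ` P" using g by blast
  qed
qed

lemma al_mult: assumes a: "a \<in> carrier S" and b: "b \<in> carrier S"
  shows "al (a \<otimes> b) = al a \<otimes> al b"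
proof -
  interpret group S by (rule grp)
  let ?S = "carrier S"
  have m: "\<And>x. x \<in> ?S \<Longrightarrow> L_dlt L ?S ?S x \<in> L_mor L ?S ?S" using dlt_mor[OF S_Ob S_Ob S_Ob tS] .
  have "L_dlt L ?S ?S (al (a \<otimes> b)) = Pm ?S ?S (L_dlt L ?S ?S (a \<otimes> b))" using al[of "a \<otimes> b"] a b by simp
  also have "\<dots> = Pm ?S ?S (L_cmp L ?S ?S ?S (L_dlt L ?S ?S a) (L_dlt L ?S ?S b))"
    using dlt_cmp[OF S_Ob S_Ob S_Ob tS[OF b] tS[OF a]] by simp
  also have "\<dots> = L_cmp L ?S ?S ?S (L_dlt L ?S ?S (al a)) (L_dlt L ?S ?S (al b))"
    using Pm_cmp[OF S_Ob S_Ob S_Ob m[OF b] m[OF a]] PoS al[OF a] al[OF b] by simp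
  also have "\<dots> = L_dlt L ?S ?S (al a \<otimes> al b)"
    using dlt_cmp[OF S_Ob S_Ob S_Ob tS[OF alS[OF b]] tS[OF alS[OF a]]] by simp
  finally show ?thesis
    using dlt_inj[OF S_Ob S_Ob tS tS] a b alS by (meson m_closed)
qed

lemma al_inj: "inj_on al (carrier S)"
proof (rule inj_onI)
  let ?S = "carrier S"
  fix a b assume a: "a \<in> ?S" and b: "b \<in> ?S" and e: "al a = al b"
  have "Pm ?S ?S (L_dlt L ?S ?S a) = Pm ?S ?S (L_dlt L ?S ?S b)" using al[OF a] al[OF b] e by simp
  then have "L_dlt L ?S ?S a = L_dlt L ?S ?S b"
    using Pm_bij[OF S_Ob S_Ob] dlt_mor[OF S_Ob S_Ob S_Ob tS[OF a]] dlt_mor[OF S_Ob S_Ob S_Ob tS[OF b]]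
    unfolding bij_betw_def by (auto dest: inj_onD)
  then show "a = b" using dlt_inj[OF S_Ob S_Ob tS[OF a] tS[OF b]] by blast
qed

lemma al_surj: "al ` carrier S = carrier S" using Po_img[OF S_Ob] PoS by simp

definition ali :: "'g \<Rightarrow> 'g" where "ali = inv_into (carrier S) al"

lemma ali_al: "x \<in> carrier S \<Longrightarrow> ali (al x) = x"
  unfolding ali_def using al_inj by (simp add: inv_into_f_f)
lemma al_ali: "y \<in> carrier S \<Longrightarrow> al (ali y) = y"
  unfolding ali_def using al_surj by (simp add: f_inv_into_f)
lemma aliS: "y \<in> carrier S \<Longrightarrow> ali y \<in> carrier S"
  unfolding ali_def using al_surj by (metis inv_into_into)

lemma FC:
  assumes P: "P \<in> Ob" and Q: "Q \<in> Ob" and f: "f \<in> L_mor L P Q"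
  shows "L_prj L (Po P) (Po Q) (Pm P Q f) = restrict (\<lambda>x. al (L_prj L P Q f (ali x))) (al ` P)"
proof
  fix y
  let ?\<phi> = "L_prj L P Q f" and ?\<psi> = "L_prj L (Po P) (Po Q) (Pm P Q f)"
  have PP: "Po P \<in> Ob" and QQ: "Po Q \<in> Ob" using Po_Ob P Q by auto
  have \<phi>i: "?\<phi> \<in> injhom S P Q" using F_basic(2)[OF Ob_sub[OF P] Ob_sub[OF Q] Ob_sub[OF Q]] prj_F[OF P Q Q f] by blast
  have Pf: "Pm P Q f \<in> L_mor L (Po P) (Po Q)" by (rule Pm_mor[OF P Q Q f])
  have \<psi>i: "?\<psi> \<in> injhom S (Po P) (Po Q)"
    using F_basic(2)[OF Ob_sub[OF PP] Ob_sub[OF QQ] Ob_sub[OF QQ]] prj_F[OF PP QQ QQ Pf] by blast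
  show "?\<psi> y = restrict (\<lambda>x. al (?\<phi> (ali x))) (al ` P) y"
  proof (cases "y \<in> al ` P")
    case False
    then show ?thesis using injhomD(1)[OF \<psi>i] Po_img[OF P] by (simp add: extensional_def)
  next
    case True
    then obtain g where g: "g \<in> P" and yg: "y = al g" by blast
    have gS: "g \<in> carrier S" using g Ob_subset[OF P] by auto
    have \<phi>g: "?\<phi> g \<in> Q" using injhomD(2)[OF \<phi>i g] .
    have dgP: "L_dlt L P P g \<in> L_mor L P P" by (rule dlt_mor[OF P P P transp_in[OF Ob_sub[OF P] g]])
    have dQ: "L_dlt L Q Q (?\<phi> g) \<in> L_mor L Q Q" by (rule dlt_mor[OF Q Q Q transp_in[OF Ob_sub[OF Q] \<phi>g]])
    have "Pm P Q (L_cmp L P P Q f (L_dlt L P P g)) = L_cmp L (Po P) (Po P) (Po Q) (Pm P Q f) (L_dlt L (Po P) (Po P) (al g))"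
      using Pm_cmp[OF P P Q dgP f] eqB[OF P g] by simp
    also have "\<dots> = L_cmp L (Po P) (Po Q) (Po Q) (L_dlt L (Po Q) (Po Q) (?\<psi> (al g))) (Pm P Q f)"
      using axC[OF PP QQ QQ Pf] eqB[OF P g] by blast
    finally have l: "Pm P Q (L_cmp L P P Q f (L_dlt L P P g)) = L_cmp L (Po P) (Po Q) (Po Q) (L_dlt L (Po Q) (Po Q) (?\<psi> (al g))) (Pm P Q f)" .
    have "Pm P Q (L_cmp L P Q Q (L_dlt L Q Q (?\<phi> g)) f) = L_cmp L (Po P) (Po Q) (Po Q) (L_dlt L (Po Q) (Po Q) (al (?\<phi> g))) (Pm P Q f)"
      using Pm_cmp[OF P Q Q f dQ] eqB[OF Q \<phi>g] by simp
    then have "L_cmp L (Po P) (Po Q) (Po Q) (L_dlt L (Po Q) (Po Q) (?\<psi> (al g))) (Pm P Q f)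
       = L_cmp L (Po P) (Po Q) (Po Q) (L_dlt L (Po Q) (Po Q) (al (?\<phi> g))) (Pm P Q f)"
      using l axC[OF P Q Q f g] by simp
    moreover have u: "?\<psi> (al g) \<in> Po Q" using injhomD(2)[OF \<psi>i] eqB[OF P g] by blast
    moreover have v: "al (?\<phi> g) \<in> Po Q" using eqB[OF Q \<phi>g] by blast
    ultimately have "?\<psi> (al g) = al (?\<phi> g)" using cancel[OF PP QQ Pf u v] by blast
    then show ?thesis using yg True ali_al[OF gS] by simp
  qed
qed

end



definition cjf :: "('g \<Rightarrow> 'g) \<Rightarrow> ('g \<Rightarrow> 'g) \<Rightarrow> 'g set \<Rightarrow> ('g \<Rightarrow> 'g) \<Rightarrow> ('g \<Rightarrow> 'g)" where
  "cjf \<gamma> \<gamma>' X \<phi> = restrict (\<lambda>x. \<gamma> (\<phi> (\<gamma>' x))) (\<gamma> ` X)"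

context ctx begin

lemma nfs_sub: "nfs_hom S F Q R \<phi> \<Longrightarrow> subgroup Q S \<and> subgroup R S"
  by (induction rule: nfs_hom.induct) auto

lemma nfs_img: "nfs_hom S F Q R \<phi> \<Longrightarrow> \<phi> ` Q \<subseteq> R"
  by (induction rule: nfs_hom.induct) auto

lemma nfs_ext: "nfs_hom S F Q R \<phi> \<Longrightarrow> \<phi> \<in> extensional Q"
  by (induction rule: nfs_hom.induct) (rule restrict_extensional)+

end

locale bpair = ctx p S F L for p and S :: "'g monoid" (structure) and F and L :: "('g, 'm) lsys" +
  fixes \<gamma> \<gamma>' :: "'g \<Rightarrow> 'g"
  assumes gS: "x \<in> carrier S \<Longrightarrow> \<gamma> x \<in> carrier S"
    and g'S: "x \<in> carrier S \<Longrightarrow> \<gamma>' x \<in> carrier S"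
    and gg': "x \<in> carrier S \<Longrightarrow> \<gamma>' (\<gamma> x) = x"
    and g'g: "x \<in> carrier S \<Longrightarrow> \<gamma> (\<gamma>' x) = x"
    and ghom: "x \<in> carrier S \<Longrightarrow> y \<in> carrier S \<Longrightarrow> \<gamma> (x \<otimes> y) = \<gamma> x \<otimes> \<gamma> y"
begin

lemma sym: "bpair p S F L \<gamma>' \<gamma>"
proof
  fix x y assume x: "x \<in> carrier S" and y: "y \<in> carrier S"
  interpret group S by (rule grp)
  have "\<gamma> (\<gamma>' x \<otimes> \<gamma>' y) = x \<otimes> y" using x y by (simp add: ghom g'S g'g)
  then show "\<gamma>' (x \<otimes> y) = \<gamma>' x \<otimes> \<gamma>' y" using x y by (metis gg' g'S m_closed)
qed (auto simp: gS g'S gg' g'g)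

lemma gimgS: "\<gamma> ` carrier S = carrier S"
  using gS g'S g'g by (auto simp: image_iff) (metis g'S g'g)

lemma ghomS: "\<gamma> \<in> hom S S" using gS ghom by (auto simp: hom_def)

lemma ggrp: "group_hom S S \<gamma>"
  using grp ghomS by (simp add: group_hom_def group_hom_axioms_def)

lemma g_sub: "subgroup H S \<Longrightarrow> subgroup (\<gamma> ` H) S"
  using group_hom.subgroup_img_is_subgroup[OF ggrp] by blast

lemma g_one: "\<gamma> \<one> = \<one>" using group_hom.hom_one[OF ggrp] by simp

lemma g_inv: "x \<in> carrier S \<Longrightarrow> \<gamma> (inv x) = inv (\<gamma> x)" using group_hom.hom_inv[OF ggrp] by simp

lemma g_inj: "inj_on \<gamma> (carrier S)" by (metis gg' inj_onI)

lemma g_conj: "h \<in> carrier S \<Longrightarrow> x \<in> carrier S \<Longrightarrow> \<gamma> (conjm S h x) = conjm S (\<gamma> h) (\<gamma> x)"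
  using grp by (simp add: conjm_def ghom g_inv gS group.inv_closed group.is_monoid monoid.m_closed)

lemma img_eq_iff: "A \<subseteq> carrier S \<Longrightarrow> B \<subseteq> carrier S \<Longrightarrow> \<gamma> ` A = \<gamma> ` B \<longleftrightarrow> A = B"
  using inj_on_image_eq_iff[OF g_inj] by blast

lemma g'_img: "A \<subseteq> carrier S \<Longrightarrow> \<gamma>' ` \<gamma> ` A = A"
  using gg' by (auto simp: image_iff subset_iff)

end

locale fpa = bpair +
  assumes gOb: "P \<in> Ob \<Longrightarrow> \<gamma> ` P \<in> Ob"
    and gF: "P \<in> Ob \<Longrightarrow> Q \<in> Ob \<Longrightarrow> F (\<gamma> ` P) (\<gamma> ` Q) = cjf \<gamma> \<gamma>' P ` F P Q"
begin

lemma gFSS: "\<beta> \<in> F (carrier S) (carrier S) \<Longrightarrow> cjf \<gamma> \<gamma>' (carrier S) \<beta> \<in> F (carrier S) (carrier S)"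
  using gF[OF S_Ob S_Ob] gimgS by auto

lemma cjf_restr:
  assumes "Q \<subseteq> carrier S"
  shows "cjf \<gamma> \<gamma>' Q (restrict \<beta> Q) = restrict (cjf \<gamma> \<gamma>' (carrier S) \<beta>) (\<gamma> ` Q)"
proof
  fix x show "cjf \<gamma> \<gamma>' Q (restrict \<beta> Q) x = restrict (cjf \<gamma> \<gamma>' (carrier S) \<beta>) (\<gamma> ` Q) x"
    using assms gg' gimgS by (cases "x \<in> \<gamma> ` Q") (auto simp: cjf_def subset_iff)
qed

lemma nfs_tr: "nfs_hom S F Q R \<phi> \<Longrightarrow> nfs_hom S F (\<gamma> ` Q) (\<gamma> ` R) (cjf \<gamma> \<gamma>' Q \<phi>)"
proof (induction rule: nfs_hom.induct)
  case (restr \<alpha> Q R)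
  have QS: "Q \<subseteq> carrier S" using restr(2) subgroup.subset by blast
  have "(cjf \<gamma> \<gamma>' (carrier S) \<alpha>) ` (\<gamma> ` Q) \<subseteq> \<gamma> ` R"
  proof
    fix x assume "x \<in> cjf \<gamma> \<gamma>' (carrier S) \<alpha> ` \<gamma> ` Q"
    then obtain y where y: "y \<in> Q" "x = cjf \<gamma> \<gamma>' (carrier S) \<alpha> (\<gamma> y)" by blast
    have yS: "y \<in> carrier S" using y QS by auto
    then have "x = \<gamma> (\<alpha> y)" using y gg' by (simp add: cjf_def)
    then show "x \<in> \<gamma> ` R" using restr(4) y by auto
  qed
  then show ?case unfolding cjf_restr[OF QS]
    by (intro nfs_hom.restr gFSS restr g_sub)
next
  case (comp Q R \<phi> T \<psi>)
  have QS: "Q \<subseteq> carrier S" and RS: "R \<subseteq> carrier S"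
    using nfs_sub[OF comp(1)] subgroup.subset by blast+
  have im: "\<phi> ` Q \<subseteq> R" by (rule nfs_img[OF comp(1)])
  have "cjf \<gamma> \<gamma>' Q (restrict (\<psi> \<circ> \<phi>) Q) = restrict (cjf \<gamma> \<gamma>' R \<psi> \<circ> cjf \<gamma> \<gamma>' Q \<phi>) (\<gamma> ` Q)"
  proof
    fix x show "cjf \<gamma> \<gamma>' Q (restrict (\<psi> \<circ> \<phi>) Q) x = restrict (cjf \<gamma> \<gamma>' R \<psi> \<circ> cjf \<gamma> \<gamma>' Q \<phi>) (\<gamma> ` Q) x"
    proof (cases "x \<in> \<gamma> ` Q")
      case True
      then obtain y where y: "y \<in> Q" "x = \<gamma> y" by blast
      have yS: "y \<in> carrier S" using y QS by auto
      have py: "\<phi> y \<in> R" using im y by auto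
      have pyS: "\<phi> y \<in> carrier S" using py RS by auto
      show ?thesis using y yS py pyS by (simp add: cjf_def gg')
    qed (simp add: cjf_def)
  qed
  then show ?case using nfs_hom.comp[OF comp(3) comp(4)] by (simp only:)
qed

lemma nfs_conj_tr:
  assumes X: "subgroup X S" and Y: "Y \<in> nfs_conj S F X"
  shows "\<gamma> ` Y \<in> nfs_conj S F (\<gamma> ` X)"
proof -
  obtain \<phi> where \<phi>: "nfs_hom S F X (carrier S) \<phi>" and Yd: "Y = \<phi> ` X"
    using Y unfolding nfs_conj_def by blast
  have XS: "X \<subseteq> carrier S" using X subgroup.subset by blast
  have "nfs_hom S F (\<gamma> ` X) (carrier S) (cjf \<gamma> \<gamma>' X \<phi>)" using nfs_tr[OF \<phi>] gimgS by simp
  moreover have "cjf \<gamma> \<gamma>' X \<phi> ` (\<gamma> ` X) = \<gamma> ` Y"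
    using XS gg' Yd by (auto simp: cjf_def image_iff subset_iff)
  ultimately show ?thesis unfolding nfs_conj_def by blast
qed

end

context bpair begin

lemma conj_img: assumes X: "X \<subseteq> carrier S" and h: "h \<in> carrier S"
  shows "conjm S (\<gamma> h) ` \<gamma> ` X = \<gamma> ` conjm S h ` X"
proof -
  have "conjm S (\<gamma> h) ` \<gamma> ` X = (\<lambda>x. \<gamma> (conjm S h x)) ` X"
    unfolding image_image by (rule image_cong[OF refl]) (simp add: g_conj h subsetD[OF X])
  then show ?thesis by (simp add: image_image)
qed

lemma nrm_img: assumes X: "X \<subseteq> carrier S" shows "nrm S (\<gamma> ` X) = \<gamma> ` nrm S X"
proof
  show "nrm S (\<gamma> ` X) \<subseteq> \<gamma> ` nrm S X"
  proof
    fix g assume g: "g \<in> nrm S (\<gamma> ` X)"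
    then have gS: "g \<in> carrier S" and e: "conjm S g ` \<gamma> ` X = \<gamma> ` X" unfolding nrm_def by simp_all
    define h where "h = \<gamma>' g"
    have hS: "h \<in> carrier S" and gh: "g = \<gamma> h" using gS by (simp_all add: h_def g'S g'g)
    have "\<gamma> ` conjm S h ` X = \<gamma> ` X" using e conj_img[OF X hS] gh by simp
    moreover have "conjm S h ` X \<subseteq> carrier S" using conjm_closed hS X by blast
    ultimately have "conjm S h ` X = X" using img_eq_iff[OF _ X] by metis
    then have "h \<in> nrm S X" using hS unfolding nrm_def by simp
    then show "g \<in> \<gamma> ` nrm S X" using gh by blast
  qed
  show "\<gamma> ` nrm S X \<subseteq> nrm S (\<gamma> ` X)"
  proof
    fix g assume "g \<in> \<gamma> ` nrm S X"
    then obtain h where h: "h \<in> nrm S X" and gh: "g = \<gamma> h" by blast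
    have hS: "h \<in> carrier S" and hX: "conjm S h ` X = X" using h unfolding nrm_def by simp_all
    have "conjm S g ` \<gamma> ` X = \<gamma> ` X" using conj_img[OF X hS] hX gh by simp
    then show "g \<in> nrm S (\<gamma> ` X)" using gS[OF hS] gh unfolding nrm_def by simp
  qed
qed

lemma g_pow: "x \<in> carrier S \<Longrightarrow> \<gamma> (x [^] (n::nat)) = \<gamma> x [^] n"
  using group_hom.hom_nat_pow[OF ggrp] by simp

lemma div_img: assumes H: "H \<subseteq> carrier S" and d: "divisible_sub S H" shows "divisible_sub S (\<gamma> ` H)"
  unfolding divisible_sub_def
proof (intro ballI allI impI)
  fix x and n :: nat assume x: "x \<in> \<gamma> ` H" and n: "n > 0"
  then obtain x0 where x0: "x0 \<in> H" "x = \<gamma> x0" by blast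
  obtain y where y: "y \<in> H" "y [^] n = x0" using d x0 n unfolding divisible_sub_def by blast
  have "\<gamma> y [^] n = x" using g_pow y x0 H by auto
  then show "\<exists>y\<in>\<gamma> ` H. y [^] n = x" using y by blast
qed

end

lemma (in bpair) ident_img_sub: assumes Y: "Y \<subseteq> carrier S"
  shows "\<gamma> ` ident_comp S Y \<subseteq> ident_comp S (\<gamma> ` Y)"
proof
  fix z assume "z \<in> \<gamma> ` ident_comp S Y"
  then obtain x H where x: "x \<in> H" "z = \<gamma> x" and H: "subgroup H S" "H \<subseteq> Y" "divisible_sub S H"
    by (auto simp: ident_comp_def)
  have "subgroup (\<gamma> ` H) S" "\<gamma> ` H \<subseteq> \<gamma> ` Y" "divisible_sub S (\<gamma> ` H)"
    using g_sub[OF H(1)] H div_img[OF subgroup.subset[OF H(1)]] by auto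
  then show "z \<in> ident_comp S (\<gamma> ` Y)" using x unfolding ident_comp_def by blast
qed

lemma (in bpair) ident_img: assumes Y: "Y \<subseteq> carrier S"
  shows "ident_comp S (\<gamma> ` Y) = \<gamma> ` ident_comp S Y"
proof
  show "\<gamma> ` ident_comp S Y \<subseteq> ident_comp S (\<gamma> ` Y)" by (rule ident_img_sub[OF Y])
  interpret s: bpair p S F L \<gamma>' \<gamma> by (rule sym)
  have Y2: "\<gamma> ` Y \<subseteq> carrier S" using Y gS by auto
  have "\<gamma>' ` ident_comp S (\<gamma> ` Y) \<subseteq> ident_comp S (\<gamma>' ` \<gamma> ` Y)" by (rule s.ident_img_sub[OF Y2])
  then have "\<gamma>' ` ident_comp S (\<gamma> ` Y) \<subseteq> ident_comp S Y" using g'_img[OF Y] by simp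
  then have "\<gamma> ` \<gamma>' ` ident_comp S (\<gamma> ` Y) \<subseteq> \<gamma> ` ident_comp S Y" by blast
  moreover have "ident_comp S (\<gamma> ` Y) \<subseteq> carrier S"
    by (auto simp: ident_comp_def dest: subgroup.subset)
  ultimately show "ident_comp S (\<gamma> ` Y) \<subseteq> \<gamma> ` ident_comp S Y" using s.g'_img by simp
qed

lemma (in bpair) iso_img: assumes I: "I \<subseteq> carrier S"
  shows "\<gamma> \<in> iso (S\<lparr>carrier := I\<rparr>) (S\<lparr>carrier := \<gamma> ` I\<rparr>)"
  unfolding iso_def hom_def using I ghom inj_on_subset[OF g_inj I]
  by (auto simp: bij_betw_def subset_iff)

lemma (in bpair) card_rcos: assumes Y: "Y \<subseteq> carrier S" and I: "I \<subseteq> carrier S"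
  shows "card (rcosets\<^bsub>S\<lparr>carrier := \<gamma> ` Y\<rparr>\<^esub> (\<gamma> ` I)) = card (rcosets\<^bsub>S\<lparr>carrier := Y\<rparr>\<^esub> I)"
proof -
  have e: "rcosets\<^bsub>S\<lparr>carrier := \<gamma> ` Y\<rparr>\<^esub> (\<gamma> ` I) = (\<lambda>C. \<gamma> ` C) ` (rcosets\<^bsub>S\<lparr>carrier := Y\<rparr>\<^esub> I)"
  proof -
    have "\<gamma> ` I #>\<^bsub>S\<lparr>carrier := \<gamma> ` Y\<rparr>\<^esub> \<gamma> a = \<gamma> ` (I #>\<^bsub>S\<lparr>carrier := Y\<rparr>\<^esub> a)" if a: "a \<in> Y" for a
    proof -
      have rc: "H #>\<^bsub>S\<lparr>carrier := Z\<rparr>\<^esub> b = (\<lambda>h. h \<otimes> b) ` H" for H Z b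
        by (auto simp: r_coset_def)
      have "(\<lambda>h. h \<otimes> \<gamma> a) ` \<gamma> ` I = \<gamma> ` (\<lambda>h. h \<otimes> a) ` I"
        unfolding image_image by (rule image_cong[OF refl]) (use a Y I in \<open>simp add: ghom subset_iff\<close>)
      then show ?thesis unfolding rc .
    qed
    then show ?thesis unfolding RCOSETS_def by auto
  qed
  have "inj_on (\<lambda>C. \<gamma> ` C) (rcosets\<^bsub>S\<lparr>carrier := Y\<rparr>\<^esub> I)"
  proof (rule inj_on_subset[OF inj_on_image_Pow[OF g_inj]])
    show "rcosets\<^bsub>S\<lparr>carrier := Y\<rparr>\<^esub> I \<subseteq> Pow (carrier S)"
      using I Y grp by (auto simp: RCOSETS_def r_coset_def subset_iff group.is_monoid monoid.m_closed)
  qed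
  then show ?thesis unfolding e by (rule card_image)
qed

lemma (in bpair) ptord_img: assumes Y: "Y \<subseteq> carrier S" shows "ptord p S (\<gamma> ` Y) = ptord p S Y"
proof -
  interpret s: bpair p S F L \<gamma>' \<gamma> by (rule sym)
  let ?I = "ident_comp S Y"
  have IY: "?I \<subseteq> Y" by (auto simp: ident_comp_def)
  have IS: "?I \<subseteq> carrier S" using IY Y by auto
  have i1: "S\<lparr>carrier := ?I\<rparr> \<cong> S\<lparr>carrier := \<gamma> ` ?I\<rparr>" using iso_img[OF IS] unfolding is_iso_def by blast
  have gI: "\<gamma> ` ?I \<subseteq> carrier S" using IS gS by blast
  have "\<gamma>' \<in> iso (S\<lparr>carrier := \<gamma> ` ?I\<rparr>) (S\<lparr>carrier := \<gamma>' ` \<gamma> ` ?I\<rparr>)"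
    by (rule s.iso_img[OF gI])
  then have i2: "S\<lparr>carrier := \<gamma> ` ?I\<rparr> \<cong> S\<lparr>carrier := ?I\<rparr>" using g'_img[OF IS] unfolding is_iso_def by auto
  have "ptrank p S (\<gamma> ` Y) = ptrank p S Y"
  proof -
    have "(S\<lparr>carrier := \<gamma> ` ?I\<rparr> \<cong> prufer_torus p r) = (S\<lparr>carrier := ?I\<rparr> \<cong> prufer_torus p r)" for r
      using i1 i2 iso_trans by blast
    then show ?thesis unfolding ptrank_def ident_img[OF Y] by simp
  qed
  moreover have "card (rcosets\<^bsub>S\<lparr>carrier := \<gamma> ` Y\<rparr>\<^esub> (ident_comp S (\<gamma> ` Y))) =
      card (rcosets\<^bsub>S\<lparr>carrier := Y\<rparr>\<^esub> ?I)"
    unfolding ident_img[OF Y] by (rule card_rcos[OF Y IS])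
  ultimately show ?thesis unfolding ptord_def by simp
qed




context fpa begin

lemma F_ext: "subgroup P S \<Longrightarrow> subgroup Q S \<Longrightarrow> \<phi> \<in> F P Q \<Longrightarrow> \<phi> \<in> injhom S P Q"
  using F_basic(2) by blast

lemma cjf_img: assumes P: "P \<subseteq> carrier S" and \<phi>: "\<And>x. x \<in> P \<Longrightarrow> \<phi> x \<in> carrier S"
  shows "cjf \<gamma> \<gamma>' P \<phi> ` \<gamma> ` P = \<gamma> ` \<phi> ` P"
proof -
  have "cjf \<gamma> \<gamma>' P \<phi> ` \<gamma> ` P = (\<lambda>x. \<gamma> (\<phi> x)) ` P"
    unfolding image_image by (rule image_cong[OF refl]) (use P in \<open>simp add: cjf_def gg' subset_iff\<close>)
  then show ?thesis by (simp add: image_image)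
qed

lemma fconj_img: assumes P: "P \<in> Ob" shows "fconj S F (\<gamma> ` P) = (\<lambda>Y. \<gamma> ` Y) ` fconj S F P"
proof -
  have PS: "P \<subseteq> carrier S" using Ob_subset[OF P] .
  have e: "F (\<gamma> ` P) (carrier S) = cjf \<gamma> \<gamma>' P ` F P (carrier S)" using gF[OF P S_Ob] gimgS by simp
  have m: "\<And>\<phi> x. \<phi> \<in> F P (carrier S) \<Longrightarrow> x \<in> P \<Longrightarrow> \<phi> x \<in> carrier S"
    using injhomD(2)[OF F_ext[OF Ob_sub[OF P] subS]] by blast
  have ci: "\<And>\<phi>. \<phi> \<in> F P (carrier S) \<Longrightarrow> cjf \<gamma> \<gamma>' P \<phi> ` \<gamma> ` P = \<gamma> ` \<phi> ` P"
    using cjf_img[OF PS] m by blast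
  show ?thesis
  proof
    show "fconj S F (\<gamma> ` P) \<subseteq> (`) \<gamma> ` fconj S F P"
      unfolding fconj_def e using ci by blast
    show "(`) \<gamma> ` fconj S F P \<subseteq> fconj S F (\<gamma> ` P)"
      unfolding fconj_def e using ci by (smt (verit, best) image_eqI image_iff mem_Collect_eq subsetI)
  qed
qed

lemma fn_img: assumes P: "P \<in> Ob" and fn: "fully_normalized p S F P"
  shows "fully_normalized p S F (\<gamma> ` P)"
  unfolding fully_normalized_def
proof (intro conjI ballI)
  show "subgroup (\<gamma> ` P) S" using g_sub Ob_sub[OF P] by blast
  fix Q assume Q: "Q \<in> fconj S F (\<gamma> ` P)"
  then obtain Q0 where Q0: "Q0 \<in> fconj S F P" and QQ: "Q = \<gamma> ` Q0" using fconj_img[OF P] by blast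
  have Q0S: "Q0 \<subseteq> carrier S"
    using Q0 injhomD(2)[OF F_ext[OF Ob_sub[OF P] subS]] unfolding fconj_def by blast
  have nS: "\<And>X. nrm S X \<subseteq> carrier S" by (auto simp: nrm_def)
  have "ptord p S (nrm S Q) = ptord p S (nrm S Q0)"
    unfolding QQ nrm_img[OF Q0S] by (rule ptord_img[OF nS])
  moreover have "ptord p S (nrm S (\<gamma> ` P)) = ptord p S (nrm S P)"
    unfolding nrm_img[OF Ob_subset[OF P]] by (rule ptord_img[OF nS])
  ultimately show "ptord_le (ptord p S (nrm S Q)) (ptord p S (nrm S (\<gamma> ` P)))"
    using fn Q0 unfolding fully_normalized_def by simp
qed

end

context bpair begin

lemma outF_iso:
  assumes P: "subgroup P S" and FPP: "F (\<gamma> ` P) (\<gamma> ` P) = cjf \<gamma> \<gamma>' P ` F P P"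
  shows "(\<lambda>X. cjf \<gamma> \<gamma>' P ` X) \<in> iso (outF S F P) (outF S F (\<gamma> ` P))"
    and "cjf \<gamma> \<gamma>' P ` inn S P = inn S (\<gamma> ` P)"
proof -
  let ?c = "cjf \<gamma> \<gamma>' P" and ?P' = "\<gamma> ` P"
  let ?A = "autF_grp S F P" and ?A' = "autF_grp S F ?P'"
  have PS: "P \<subseteq> carrier S" using P subgroup.subset by blast
  have P': "subgroup ?P' S" using g_sub[OF P] .
  have f1: "\<And>a x. a \<in> F P P \<Longrightarrow> x \<in> P \<Longrightarrow> a x \<in> P" and f1e: "\<And>a. a \<in> F P P \<Longrightarrow> a \<in> extensional P"
    using injhomD[OF F_basic(2)[OF P P P, THEN subsetD]] by blast+
  have f2: "inj_on ?c (F P P)"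
  proof (rule inj_onI)
    fix a b assume a: "a \<in> F P P" and b: "b \<in> F P P" and e: "?c a = ?c b"
    show "a = b"
    proof (rule extensionalityI[OF f1e[OF a] f1e[OF b]])
      fix x assume x: "x \<in> P"
      have "?c a (\<gamma> x) = ?c b (\<gamma> x)" using e by simp
      then have "\<gamma> (a x) = \<gamma> (b x)" using x PS gg' by (simp add: cjf_def subsetD)
      then show "a x = b x" using f1[OF a x] f1[OF b x] PS g_inj by (meson inj_onD subsetD)
    qed
  qed
  have f3: "?c (restrict (a \<circ> b) P) = restrict (?c a \<circ> ?c b) ?P'" if b: "\<And>x. x \<in> P \<Longrightarrow> b x \<in> P" for a b
  proof
    fix y show "?c (restrict (a \<circ> b) P) y = restrict (?c a \<circ> ?c b) ?P' y"
    proof (cases "y \<in> ?P'")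
      case True
      then obtain x where x: "x \<in> P" "y = \<gamma> x" by blast
      have "b x \<in> carrier S" using b[OF x(1)] PS by auto
      then show ?thesis using x b[OF x(1)] PS by (simp add: cjf_def gg' subsetD)
    qed (simp add: cjf_def)
  qed
  have f4: "inn S P \<subseteq> F P P"
  proof
    fix h assume "h \<in> inn S P"
    then obtain g where g: "g \<in> P" "h = restrict (conjm S g) P" by (auto simp: inn_def)
    then show "h \<in> F P P" using F_basic(1)[OF P P P] transp_in[OF P g(1)] unfolding homS_def by blast
  qed
  have f5: "?c ` inn S P = inn S ?P'"
  proof -
    have "?c (restrict (conjm S g) P) = restrict (conjm S (\<gamma> g)) ?P'" if g: "g \<in> P" for g
    proof
      fix y show "?c (restrict (conjm S g) P) y = restrict (conjm S (\<gamma> g)) ?P' y"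
      proof (cases "y \<in> ?P'")
        case True
        then obtain x where x: "x \<in> P" "y = \<gamma> x" by blast
        then show ?thesis using g PS by (simp add: cjf_def gg' g_conj subsetD)
      qed (simp add: cjf_def)
    qed
    then show ?thesis unfolding inn_def by (auto simp: image_iff) (metis)+
  qed
  then show "?c ` inn S P = inn S ?P'" .
  have mA: "\<And>a b. a \<otimes>\<^bsub>?A\<^esub> b = restrict (a \<circ> b) P" and mA': "\<And>a b. a \<otimes>\<^bsub>?A'\<^esub> b = restrict (a \<circ> b) ?P'"
    by (simp_all add: autF_grp_def)
  have rc: "?c ` (inn S P #>\<^bsub>?A\<^esub> a) = inn S ?P' #>\<^bsub>?A'\<^esub> ?c a" if a: "a \<in> F P P" for a
  proof -
    have "?c ` (inn S P #>\<^bsub>?A\<^esub> a) = (\<lambda>h. ?c h \<otimes>\<^bsub>?A'\<^esub> ?c a) ` inn S P"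
      unfolding r_coset_def mA mA' using f3 f1[OF a] by (auto simp: image_iff)
    also have "\<dots> = (\<lambda>h. h \<otimes>\<^bsub>?A'\<^esub> ?c a) ` (?c ` inn S P)" by (simp add: image_image)
    also have "\<dots> = inn S ?P' #>\<^bsub>?A'\<^esub> ?c a" unfolding f5 r_coset_def by auto
    finally show ?thesis .
  qed
  have csub: "inn S P #>\<^bsub>?A\<^esub> a \<subseteq> F P P" if a: "a \<in> F P P" for a
    using f4 a F_basic(3)[OF P P P] unfolding r_coset_def mA by blast
  have carr: "carrier (outF S F P) = (\<lambda>a. inn S P #>\<^bsub>?A\<^esub> a) ` F P P"
    and carr': "carrier (outF S F ?P') = (\<lambda>a. inn S ?P' #>\<^bsub>?A'\<^esub> a) ` F ?P' ?P'"
    by (auto simp: outF_def FactGroup_def RCOSETS_def autF_grp_def)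
  have img: "(\<lambda>X. ?c ` X) ` carrier (outF S F P) = carrier (outF S F ?P')"
    unfolding carr carr' FPP image_image using rc by auto
  have inj: "inj_on (\<lambda>X. ?c ` X) (carrier (outF S F P))"
    by (rule inj_on_subset[OF inj_on_image_Pow[OF f2]]) (use csub in \<open>auto simp: carr\<close>)
  have sm: "?c ` (X <#>\<^bsub>?A\<^esub> Y) = (?c ` X) <#>\<^bsub>?A'\<^esub> (?c ` Y)" if X: "X \<subseteq> F P P" and Y: "Y \<subseteq> F P P" for X Y
  proof -
    have "?c ` (X <#>\<^bsub>?A\<^esub> Y) = (\<Union>h\<in>X. \<Union>k\<in>Y. {?c h \<otimes>\<^bsub>?A'\<^esub> ?c k})"
      unfolding set_mult_def mA mA' using f3 f1 X Y by (auto simp: image_iff subset_iff) (metis)+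
    also have "\<dots> = (?c ` X) <#>\<^bsub>?A'\<^esub> (?c ` Y)" unfolding set_mult_def by auto
    finally show ?thesis .
  qed
  show "(\<lambda>X. ?c ` X) \<in> iso (outF S F P) (outF S F ?P')"
    unfolding iso_def bij_betw_def
  proof (intro CollectI conjI)
    show "(\<lambda>X. ?c ` X) \<in> hom (outF S F P) (outF S F ?P')"
    proof (rule homI)
      show "\<And>X. X \<in> carrier (outF S F P) \<Longrightarrow> ?c ` X \<in> carrier (outF S F ?P')" using img by blast
      fix X Y assume X: "X \<in> carrier (outF S F P)" and Y: "Y \<in> carrier (outF S F P)"
      have "X \<subseteq> F P P" "Y \<subseteq> F P P" using X Y csub unfolding carr by auto
      then show "?c ` (X \<otimes>\<^bsub>outF S F P\<^esub> Y) = ?c ` X \<otimes>\<^bsub>outF S F ?P'\<^esub> ?c ` Y"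
        using sm by (simp add: outF_def FactGroup_def)
    qed
  qed (use inj img in auto)
qed

end


lemma grp_transfer:
  assumes G': "group G'" and h: "\<Phi> \<in> hom G' G" and s: "\<Phi> ` carrier G' = carrier G"
    and o: "\<Phi> \<one>\<^bsub>G'\<^esub> = \<one>\<^bsub>G\<^esub>"
  shows "group G"
proof -
  interpret g: group G' by (rule G')
  have hm: "\<And>x y. x \<in> carrier G' \<Longrightarrow> y \<in> carrier G' \<Longrightarrow> \<Phi> (x \<otimes>\<^bsub>G'\<^esub> y) = \<Phi> x \<otimes>\<^bsub>G\<^esub> \<Phi> y"
    using h by (simp add: hom_def)
  have ex: "\<And>x. x \<in> carrier G \<Longrightarrow> \<exists>x'\<in>carrier G'. x = \<Phi> x'" using s by blast
  have inC: "\<And>x'. x' \<in> carrier G' \<Longrightarrow> \<Phi> x' \<in> carrier G" using s by blast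
  show ?thesis
  proof (rule groupI)
    fix x y assume x: "x \<in> carrier G" and y: "y \<in> carrier G"
    obtain x' where x': "x' \<in> carrier G'" "x = \<Phi> x'" using ex[OF x] by blast
    obtain y' where y': "y' \<in> carrier G'" "y = \<Phi> y'" using ex[OF y] by blast
    have "x \<otimes>\<^bsub>G\<^esub> y = \<Phi> (x' \<otimes>\<^bsub>G'\<^esub> y')" using hm[OF x'(1) y'(1)] x' y' by simp
    then show "x \<otimes>\<^bsub>G\<^esub> y \<in> carrier G" using inC[OF g.m_closed[OF x'(1) y'(1)]] by simp
  next
    show "\<one>\<^bsub>G\<^esub> \<in> carrier G" using o inC[OF g.one_closed] by simp
  next
    fix x y z assume x: "x \<in> carrier G" and y: "y \<in> carrier G" and z: "z \<in> carrier G"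
    obtain x' where x': "x' \<in> carrier G'" "x = \<Phi> x'" using ex[OF x] by blast
    obtain y' where y': "y' \<in> carrier G'" "y = \<Phi> y'" using ex[OF y] by blast
    obtain z' where z': "z' \<in> carrier G'" "z = \<Phi> z'" using ex[OF z] by blast
    have "x \<otimes>\<^bsub>G\<^esub> y \<otimes>\<^bsub>G\<^esub> z = \<Phi> (x' \<otimes>\<^bsub>G'\<^esub> y' \<otimes>\<^bsub>G'\<^esub> z')"
      using x' y' z' hm[OF x'(1) y'(1)] hm[OF g.m_closed[OF x'(1) y'(1)] z'(1)] by simp
    also have "\<dots> = \<Phi> (x' \<otimes>\<^bsub>G'\<^esub> (y' \<otimes>\<^bsub>G'\<^esub> z'))" using x' y' z' g.m_assoc by simp
    also have "\<dots> = x \<otimes>\<^bsub>G\<^esub> (y \<otimes>\<^bsub>G\<^esub> z)"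
      using x' y' z' hm[OF y'(1) z'(1)] hm[OF x'(1) g.m_closed[OF y'(1) z'(1)]] by simp
    finally show "x \<otimes>\<^bsub>G\<^esub> y \<otimes>\<^bsub>G\<^esub> z = x \<otimes>\<^bsub>G\<^esub> (y \<otimes>\<^bsub>G\<^esub> z)" .
  next
    fix x assume x: "x \<in> carrier G"
    obtain x' where x': "x' \<in> carrier G'" "x = \<Phi> x'" using ex[OF x] by blast
    have "\<one>\<^bsub>G\<^esub> \<otimes>\<^bsub>G\<^esub> x = \<Phi> (\<one>\<^bsub>G'\<^esub> \<otimes>\<^bsub>G'\<^esub> x')" using hm[OF g.one_closed x'(1)] o x' by simp
    then show "\<one>\<^bsub>G\<^esub> \<otimes>\<^bsub>G\<^esub> x = x" using x' by simp
  next
    fix x assume x: "x \<in> carrier G"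
    obtain x' where x': "x' \<in> carrier G'" "x = \<Phi> x'" using ex[OF x] by blast
    have "\<Phi> (inv\<^bsub>G'\<^esub> x') \<otimes>\<^bsub>G\<^esub> x = \<Phi> (inv\<^bsub>G'\<^esub> x' \<otimes>\<^bsub>G'\<^esub> x')"
      using hm[OF g.inv_closed[OF x'(1)] x'(1)] x' by simp
    also have "\<dots> = \<one>\<^bsub>G\<^esub>" using x' o by simp
    finally have "\<Phi> (inv\<^bsub>G'\<^esub> x') \<otimes>\<^bsub>G\<^esub> x = \<one>\<^bsub>G\<^esub>" .
    then show "\<exists>y\<in>carrier G. y \<otimes>\<^bsub>G\<^esub> x = \<one>\<^bsub>G\<^esub>" using inC[OF g.inv_closed[OF x'(1)]] by blast
  qed
qed

context fpa begin

lemma cjf_inv: assumes P: "P \<subseteq> carrier S" and a: "a \<in> extensional P" and am: "\<And>x. x \<in> P \<Longrightarrow> a x \<in> carrier S"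
  shows "cjf \<gamma>' \<gamma> (\<gamma> ` P) (cjf \<gamma> \<gamma>' P a) = a"
proof (rule extensionalityI[OF _ a])
  show "cjf \<gamma>' \<gamma> (\<gamma> ` P) (cjf \<gamma> \<gamma>' P a) \<in> extensional P"
    unfolding cjf_def g'_img[OF P] by (rule restrict_extensional)
  fix x assume x: "x \<in> P"
  have xS: "x \<in> carrier S" using x P by blast
  have gx: "\<gamma> x \<in> \<gamma> ` P" using x by blast
  have "cjf \<gamma>' \<gamma> (\<gamma> ` P) (cjf \<gamma> \<gamma>' P a) x = \<gamma>' (cjf \<gamma> \<gamma>' P a (\<gamma> x))"
    unfolding cjf_def g'_img[OF P] using x by simp
  also have "\<dots> = \<gamma>' (\<gamma> (a (\<gamma>' (\<gamma> x))))" unfolding cjf_def using gx by simp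
  also have "\<dots> = a x" using gg'[OF xS] gg'[OF am[OF x]] by simp
  finally show "cjf \<gamma>' \<gamma> (\<gamma> ` P) (cjf \<gamma> \<gamma>' P a) x = a x" .
qed

lemma rad_img: assumes P: "P \<in> Ob" and r: "F_radical p S F P"
  shows "F_radical p S F (\<gamma> ` P)"
proof -
  interpret s: bpair p S F L \<gamma>' \<gamma> by (rule sym)
  have Ps: "subgroup P S" using Ob_sub[OF P] .
  have PS: "P \<subseteq> carrier S" using Ob_subset[OF P] .
  have P's: "subgroup (\<gamma> ` P) S" using g_sub[OF Ps] .
  have FPP: "F (\<gamma> ` P) (\<gamma> ` P) = cjf \<gamma> \<gamma>' P ` F P P" by (rule gF[OF P P])
  have ii: "cjf \<gamma>' \<gamma> (\<gamma> ` P) (cjf \<gamma> \<gamma>' P a) = a" if a: "a \<in> F P P" for a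
  proof -
    have ai: "a \<in> injhom S P P" using F_basic(2)[OF Ps Ps Ps] a by blast
    show ?thesis by (rule cjf_inv[OF PS injhomD(1)[OF ai]]) (use injhomD(2)[OF ai] PS in blast)
  qed
  have "cjf \<gamma>' \<gamma> (\<gamma> ` P) ` F (\<gamma> ` P) (\<gamma> ` P) = (\<lambda>a. a) ` F P P"
    unfolding FPP image_image by (rule image_cong[OF refl]) (rule ii)
  then have FPP2: "F (\<gamma>' ` \<gamma> ` P) (\<gamma>' ` \<gamma> ` P) = cjf \<gamma>' \<gamma> (\<gamma> ` P) ` F (\<gamma> ` P) (\<gamma> ` P)"
    unfolding g'_img[OF PS] by simp
  note is2 = s.outF_iso[OF P's FPP2, unfolded g'_img[OF PS]]
  let ?\<Phi> = "\<lambda>X. cjf \<gamma>' \<gamma> (\<gamma> ` P) ` X"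
  show ?thesis unfolding F_radical_def
  proof (intro conjI allI impI)
    show "subgroup (\<gamma> ` P) S" by (rule P's)
    fix H assume H: "H \<lhd> outF S F (\<gamma> ` P)" and fin: "finite H" and cH: "\<exists>n. card H = p ^ n"
    have g1: "group (outF S F (\<gamma> ` P))" by (rule normal.axioms(2)[OF H])
    have ones: "\<one>\<^bsub>outF S F X\<^esub> = inn S X" for X by (simp add: outF_def FactGroup_def)
    have o: "?\<Phi> \<one>\<^bsub>outF S F (\<gamma> ` P)\<^esub> = \<one>\<^bsub>outF S F P\<^esub>"
      unfolding ones by (rule is2(2))
    have bj: "bij_betw ?\<Phi> (carrier (outF S F (\<gamma> ` P))) (carrier (outF S F P))"
      by (rule is2(1)[unfolded iso_def, THEN CollectD, THEN conjunct2])
    have h2: "?\<Phi> \<in> hom (outF S F (\<gamma> ` P)) (outF S F P)"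
      by (rule is2(1)[unfolded iso_def, THEN CollectD, THEN conjunct1])
    have s2: "?\<Phi> ` carrier (outF S F (\<gamma> ` P)) = carrier (outF S F P)" by (rule bij_betw_imp_surj_on[OF bj])
    have g2: "group (outF S F P)" by (rule grp_transfer[OF g1 h2 s2 o])
    have nH: "?\<Phi> ` H \<lhd> outF S F P" by (rule iso_normal_subgroup[OF is2(1) g1 g2 H])
    have Hc: "H \<subseteq> carrier (outF S F (\<gamma> ` P))" by (rule subgroup.subset[OF normal_imp_subgroup[OF H]])
    have inj: "inj_on ?\<Phi> (carrier (outF S F (\<gamma> ` P)))" by (rule bij_betw_imp_inj_on[OF bj])
    have "card (?\<Phi> ` H) = card H" using card_image[OF inj_on_subset[OF inj Hc]] .
    then have cH': "\<exists>n. card (?\<Phi> ` H) = p ^ n" using cH by simp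
    have fin': "finite (?\<Phi> ` H)" using fin by simp
    have rr: "\<forall>H. H \<lhd> outF S F P \<longrightarrow> finite H \<longrightarrow> (\<exists>n. card H = p ^ n) \<longrightarrow> H = {\<one>\<^bsub>outF S F P\<^esub>}"
      by (rule r[unfolded F_radical_def, THEN conjunct2])
    have im: "?\<Phi> ` H = {\<one>\<^bsub>outF S F P\<^esub>}" by (rule rr[rule_format, OF nH fin' cH'])
    have one: "\<one>\<^bsub>outF S F (\<gamma> ` P)\<^esub> \<in> H" by (rule subgroup.one_closed[OF normal_imp_subgroup[OF H]])
    have oc: "\<one>\<^bsub>outF S F (\<gamma> ` P)\<^esub> \<in> carrier (outF S F (\<gamma> ` P))" using Hc one by blast
    have "\<forall>X\<in>H. X = \<one>\<^bsub>outF S F (\<gamma> ` P)\<^esub>"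
    proof
      fix X assume X: "X \<in> H"
      have "?\<Phi> X \<in> ?\<Phi> ` H" using X by (rule imageI)
      then have e1: "?\<Phi> X = \<one>\<^bsub>outF S F P\<^esub>" unfolding im by (rule singletonD)
      have "?\<Phi> X = ?\<Phi> \<one>\<^bsub>outF S F (\<gamma> ` P)\<^esub>" by (rule trans[OF e1 o[symmetric]])
      then show "X = \<one>\<^bsub>outF S F (\<gamma> ` P)\<^esub>" by (rule inj_onD[OF inj _ subsetD[OF Hc X] oc])
    qed
    then show "H = {\<one>\<^bsub>outF S F (\<gamma> ` P)\<^esub>}" using one by blast
  qed
qed

end




context eqv begin

lemma bp: "bpair p S F L al ali"
  by unfold_locales (auto simp: alS aliS ali_al al_ali al_mult)

lemma al_Ob: "P \<in> Ob \<Longrightarrow> al ` P \<in> Ob" using Po_img Po_Ob by metis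

lemma al_F: assumes P: "P \<in> Ob" and Q: "Q \<in> Ob"
  shows "F (al ` P) (al ` Q) = cjf al ali P ` F P Q"
proof -
  have "F (al ` P) (al ` Q) = L_prj L (Po P) (Po Q) ` L_mor L (Po P) (Po Q)"
    using prj_surj[OF Po_Ob[OF P] Po_Ob[OF Q] Po_Ob[OF Q]] Po_img[OF P] Po_img[OF Q] by simp
  also have "\<dots> = L_prj L (Po P) (Po Q) ` Pm P Q ` L_mor L P Q"
    using Pm_bij[OF P Q] by (simp add: bij_betw_def)
  also have "\<dots> = (\<lambda>f. cjf al ali P (L_prj L P Q f)) ` L_mor L P Q"
    unfolding image_image by (rule image_cong[OF refl]) (simp add: FC[OF P Q] cjf_def)
  also have "\<dots> = cjf al ali P ` F P Q"
    using prj_surj[OF P Q Q] by (simp add: image_image[symmetric])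
  finally show ?thesis .
qed

lemma fpA: "fpa p S F L al ali"
  using bp al_Ob al_F by (simp add: fpa_def fpa_axioms_def)

end


lemma (in ctx) Liso_img: assumes X: "X \<in> Ob" and Y: "Y \<in> Ob" and f: "L_iso L X Y f"
  shows "L_prj L X Y f ` X = Y"
proof -
  obtain g where fm: "f \<in> L_mor L X Y" and gm: "g \<in> L_mor L Y X"
    and fg: "L_cmp L Y X Y f g = L_id L Y" using f unfolding L_iso_def by blast
  have fi: "L_prj L X Y f \<in> injhom S X Y"
    using F_basic(2)[OF Ob_sub[OF X] Ob_sub[OF Y] Ob_sub[OF Y]] prj_F[OF X Y Y fm] by blast
  have gi: "L_prj L Y X g \<in> injhom S Y X"
    using F_basic(2)[OF Ob_sub[OF Y] Ob_sub[OF X] Ob_sub[OF X]] prj_F[OF Y X X gm] by blast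
  have e: "restrict (L_prj L X Y f \<circ> L_prj L Y X g) Y = restrict id Y"
    using prj_cmp[OF Y X Y gm fm] fg prj_id[OF Y Y Y] by simp
  show ?thesis
  proof
    show "L_prj L X Y f ` X \<subseteq> Y" using injhomD(2)[OF fi] by blast
    show "Y \<subseteq> L_prj L X Y f ` X"
    proof
      fix y assume y: "y \<in> Y"
      have "restrict (L_prj L X Y f \<circ> L_prj L Y X g) Y y = restrict id Y y" using e by simp
      then have "y = L_prj L X Y f (L_prj L Y X g y)" using y by simp
      then show "y \<in> L_prj L X Y f ` X" using injhomD(2)[OF gi y] by blast
    qed
  qed
qed

context eqv begin

lemma ali_Ob: assumes Q: "Q \<in> Ob" shows "ali ` Q \<in> Ob"
proof -
  interpret A: fpa p S F L al ali by (rule fpA)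
  interpret B: bpair p S F L ali al by (rule A.sym)
  obtain P0 f where P0: "P0 \<in> Ob" and iso: "L_iso L (Po P0) Q f" using ess[OF Q] by blast
  have PP: "Po P0 \<in> Ob" using Po_Ob[OF P0] .
  have fm: "f \<in> L_mor L (Po P0) Q" using iso unfolding L_iso_def by blast
  let ?\<psi> = "L_prj L (Po P0) Q f"
  have im: "?\<psi> ` (al ` P0) = Q" using Liso_img[OF PP Q iso] Po_img[OF P0] by simp
  have "?\<psi> \<in> F (al ` P0) (al ` carrier S)"
    using F_toS[OF Ob_sub[OF PP] Ob_sub[OF Q] prj_F[OF PP Q Q fm]] Po_img[OF P0] al_surj by simp
  then obtain \<phi> where \<phi>: "\<phi> \<in> F P0 (carrier S)" and \<psi>\<phi>: "?\<psi> = cjf al ali P0 \<phi>"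
    using al_F[OF P0 S_Ob] by blast
  have P0s: "subgroup P0 S" using Ob_sub[OF P0] .
  have \<phi>i: "\<phi> \<in> injhom S P0 (carrier S)" using F_basic(2)[OF P0s subS subS] \<phi> by blast
  have QS: "Q \<subseteq> carrier S" using Ob_subset[OF Q] .
  have "Q = al ` \<phi> ` P0"
    using im \<psi>\<phi> A.cjf_img[OF Ob_subset[OF P0]] injhomD(2)[OF \<phi>i] by simp
  then have aQ: "ali ` Q = \<phi> ` P0" using A.g'_img injhomD(2)[OF \<phi>i] by (simp add: image_subset_iff)
  have sg: "subgroup (\<phi> ` P0) S" using B.g_sub[OF Ob_sub[OF Q]] aQ by simp
  have "F_centric S F (\<phi> ` P0)" unfolding F_centric_def
  proof (intro conjI ballI)
    show "subgroup (\<phi> ` P0) S" by (rule sg)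
    fix R assume R: "R \<in> fconj S F (\<phi> ` P0)"
    then obtain \<chi> where \<chi>: "\<chi> \<in> F (\<phi> ` P0) (carrier S)" and Rd: "R = \<chi> ` \<phi> ` P0"
      unfolding fconj_def by blast
    have \<phi>2: "\<phi> \<in> F P0 (\<phi> ` P0)" using F_basic(4)[OF P0s subS subS \<phi>] by blast
    have "restrict (\<chi> \<circ> \<phi>) P0 \<in> F P0 (carrier S)" by (rule F_basic(3)[OF P0s sg subS \<phi>2 \<chi>])
    moreover have "restrict (\<chi> \<circ> \<phi>) P0 ` P0 = R" using Rd by auto
    ultimately have "R \<in> fconj S F P0" unfolding fconj_def by blast
    then show "cent S R \<subseteq> R" by (rule Ob_cent[OF P0])
  qed
  then show ?thesis using aQ by (simp add: L_ob_def)
qed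

lemma ali_F: assumes P: "P \<in> Ob" and Q: "Q \<in> Ob"
  shows "F (ali ` P) (ali ` Q) = cjf ali al P ` F P Q"
proof -
  interpret A: fpa p S F L al ali by (rule fpA)
  define P' where "P' = ali ` P"
  define Q' where "Q' = ali ` Q"
  have P': "P' \<in> Ob" and Q': "Q' \<in> Ob" using ali_Ob P Q by (auto simp: P'_def Q'_def)
  have PP: "al ` P' = P" and QQ: "al ` Q' = Q"
    using Ob_subset[OF P] Ob_subset[OF Q] al_ali by (force simp: P'_def Q'_def image_image)+
  have "cjf ali al P ` F P Q = cjf ali al P ` cjf al ali P' ` F P' Q'"
    using al_F[OF P' Q'] PP QQ by simp
  also have "\<dots> = (\<lambda>a. a) ` F P' Q'"
    unfolding image_image
  proof (rule image_cong[OF refl])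
    fix a assume a: "a \<in> F P' Q'"
    have ai: "a \<in> injhom S P' Q'" using F_basic(2)[OF Ob_sub[OF P'] Ob_sub[OF Q'] Ob_sub[OF Q']] a by blast
    show "cjf ali al P (cjf al ali P' a) = a"
      using A.cjf_inv[OF Ob_subset[OF P'] injhomD(1)[OF ai]] injhomD(2)[OF ai] Ob_subset[OF Q'] PP by blast
  qed
  finally show ?thesis by (simp add: P'_def Q'_def)
qed

lemma fpB: "fpa p S F L ali al"
proof -
  interpret A: fpa p S F L al ali by (rule fpA)
  show ?thesis using A.sym ali_Ob ali_F by (simp add: fpa_def fpa_axioms_def)
qed

end


context eqv begin

lemma part1: assumes cf: "complete_fcf p S F P k"
  shows "complete_fcf p S F (\<lambda>i. Po (P i)) k"
proof -
  interpret A: fpa p S F L al ali by (rule fpA)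
  interpret B: fpa p S F L ali al by (rule fpB)
  have P0: "P 0 = carrier S" and fn: "\<And>i. i \<le> k \<Longrightarrow> fully_normalized p S F (P i)"
    and cov: "\<And>Q. F_centric S F Q \<Longrightarrow> F_radical p S F Q \<Longrightarrow> \<exists>i\<le>k. P i \<in> fconj S F Q"
    and cr: "\<And>i. i \<le> k \<Longrightarrow> F_centric S F (P i) \<and> F_radical p S F (P i)"
    and dis: "\<And>i j. i \<le> k \<Longrightarrow> j \<le> k \<Longrightarrow> P j \<in> nfs_conj S F (P i) \<Longrightarrow> i = j"
    and cov2: "\<And>Q. F_centric S F Q \<Longrightarrow> F_radical p S F Q \<Longrightarrow> \<exists>i\<le>k. P i \<in> nfs_conj S F Q"
    using cf unfolding complete_fcf_def fusion_controlling_family_def by blast+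
  have Pob: "\<And>i. i \<le> k \<Longrightarrow> P i \<in> Ob" using cr by (simp add: L_ob_def)
  have PPi: "\<And>i. i \<le> k \<Longrightarrow> Po (P i) = al ` P i" using Po_img Pob by blast
  have bk: "\<And>Q. Q \<in> Ob \<Longrightarrow> al ` ali ` Q = Q"
    using B.g'_img Ob_subset by blast
  show ?thesis unfolding complete_fcf_def fusion_controlling_family_def
  proof (intro conjI allI impI)
    show "Po (P 0) = carrier S" using P0 PoS by simp
  next
    fix i assume i: "i \<le> k"
    show "fully_normalized p S F (Po (P i))" using A.fn_img[OF Pob[OF i] fn[OF i]] PPi[OF i] by simp
  next
    fix i assume i: "i \<le> k"
    show "F_centric S F (Po (P i))" using Po_Ob[OF Pob[OF i]] by (simp add: L_ob_def)
  next
    fix i assume i: "i \<le> k"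
    show "F_radical p S F (Po (P i))" using A.rad_img[OF Pob[OF i]] cr[OF i] PPi[OF i] by simp
  next
    fix Q assume Q: "F_centric S F Q \<and> F_radical p S F Q"
    have Qo: "Q \<in> Ob" using Q by (simp add: L_ob_def)
    have Q': "ali ` Q \<in> Ob" using B.gOb[OF Qo] .
    have "F_radical p S F (ali ` Q)" using B.rad_img[OF Qo] Q by blast
    then obtain i where i: "i \<le> k" and Pi: "P i \<in> fconj S F (ali ` Q)"
      using cov Q' by (auto simp: L_ob_def)
    have "al ` P i \<in> fconj S F (al ` ali ` Q)" using A.fconj_img[OF Q'] Pi by blast
    then show "\<exists>i\<le>k. Po (P i) \<in> fconj S F Q" using i PPi bk[OF Qo] by auto
  next
    fix Q assume Q: "F_centric S F Q \<and> F_radical p S F Q"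
    have Qo: "Q \<in> Ob" using Q by (simp add: L_ob_def)
    have Q': "ali ` Q \<in> Ob" using B.gOb[OF Qo] .
    have "F_radical p S F (ali ` Q)" using B.rad_img[OF Qo] Q by blast
    then obtain i where i: "i \<le> k" and Pi: "P i \<in> nfs_conj S F (ali ` Q)"
      using cov2 Q' by (auto simp: L_ob_def)
    have "al ` P i \<in> nfs_conj S F (al ` ali ` Q)" using A.nfs_conj_tr[OF Ob_sub[OF Q'] Pi] .
    then show "\<exists>i\<le>k. Po (P i) \<in> nfs_conj S F Q" using i PPi bk[OF Qo] by auto
  next
    fix i j assume i: "i \<le> k" and j: "j \<le> k" and e: "Po (P j) \<in> nfs_conj S F (Po (P i))"
    have "ali ` al ` P j \<in> nfs_conj S F (ali ` al ` P i)"
      using B.nfs_conj_tr[OF Ob_sub[OF Po_Ob[OF Pob[OF i]]]] e PPi[OF i] PPi[OF j] by simp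
    then have "P j \<in> nfs_conj S F (P i)" using A.g'_img Ob_subset Pob i j by simp
    then show "i = j" using dis i j by blast
  qed
qed

end




context ctx begin

lemma FSS_comp: "\<alpha> \<in> F (carrier S) (carrier S) \<Longrightarrow> \<beta> \<in> F (carrier S) (carrier S) \<Longrightarrow>
   restrict (\<beta> \<circ> \<alpha>) (carrier S) \<in> F (carrier S) (carrier S)"
  using F_basic(3)[OF subS subS subS] by blast

lemma FSS_into: "\<beta> \<in> F (carrier S) (carrier S) \<Longrightarrow> x \<in> carrier S \<Longrightarrow> \<beta> x \<in> carrier S"
  using injhomD(2)[OF F_basic(2)[OF subS subS subS, THEN subsetD]] by blast

lemma nfs_char: "nfs_hom S F Q R \<phi> \<Longrightarrow> \<exists>\<beta>\<in>F (carrier S) (carrier S). \<beta> ` Q \<subseteq> R \<and> \<phi> = restrict \<beta> Q"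
proof (induction rule: nfs_hom.induct)
  case (restr \<alpha> Q R) then show ?case by blast
next
  case (comp Q R \<phi> T \<psi>)
  obtain \<beta>1 where b1: "\<beta>1 \<in> F (carrier S) (carrier S)" "\<beta>1 ` Q \<subseteq> R" "\<phi> = restrict \<beta>1 Q" using comp by blast
  obtain \<beta>2 where b2: "\<beta>2 \<in> F (carrier S) (carrier S)" "\<beta>2 ` R \<subseteq> T" "\<psi> = restrict \<beta>2 R" using comp by blast
  have QS: "Q \<subseteq> carrier S" using nfs_sub[OF comp(1)] subgroup.subset by blast
  have "restrict (\<psi> \<circ> \<phi>) Q = restrict (restrict (\<beta>2 \<circ> \<beta>1) (carrier S)) Q"
    using b1 b2 QS by (auto simp: fun_eq_iff subset_iff)
  moreover have "restrict (\<beta>2 \<circ> \<beta>1) (carrier S) ` Q \<subseteq> T" using b1 b2 QS by auto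
  ultimately show ?case using FSS_comp[OF b1(1) b2(1)] by blast
qed

lemma nfs_conj_char: assumes X: "subgroup X S"
  shows "nfs_conj S F X = {\<beta> ` X | \<beta>. \<beta> \<in> F (carrier S) (carrier S)}"
proof
  show "nfs_conj S F X \<subseteq> {\<beta> ` X | \<beta>. \<beta> \<in> F (carrier S) (carrier S)}"
  proof
    fix Y assume "Y \<in> nfs_conj S F X"
    then obtain \<phi> where \<phi>: "nfs_hom S F X (carrier S) \<phi>" and Y: "Y = \<phi> ` X" unfolding nfs_conj_def by blast
    obtain \<beta> where "\<beta> \<in> F (carrier S) (carrier S)" "\<phi> = restrict \<beta> X" using nfs_char[OF \<phi>] by blast
    then show "Y \<in> {\<beta> ` X | \<beta>. \<beta> \<in> F (carrier S) (carrier S)}" using Y by auto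
  qed
  show "{\<beta> ` X | \<beta>. \<beta> \<in> F (carrier S) (carrier S)} \<subseteq> nfs_conj S F X"
  proof
    fix Y assume "Y \<in> {\<beta> ` X | \<beta>. \<beta> \<in> F (carrier S) (carrier S)}"
    then obtain \<beta> where b: "\<beta> \<in> F (carrier S) (carrier S)" and Y: "Y = \<beta> ` X" by blast
    have "\<beta> ` X \<subseteq> carrier S" using FSS_into[OF b] subgroup.subset[OF X] by blast
    then have "nfs_hom S F X (carrier S) (restrict \<beta> X)" using nfs_hom.restr[of \<beta> F S X "carrier S"] b X subS by blast
    moreover have "restrict \<beta> X ` X = Y" using Y by auto
    ultimately show "Y \<in> nfs_conj S F X" unfolding nfs_conj_def by blast
  qed
qed

lemma nfs_refl: assumes X: "subgroup X S" shows "X \<in> nfs_conj S F X"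
proof -
  have "restrict (\<lambda>x. x) (carrier S) ` X = X" using subgroup.subset[OF X] by auto
  then show ?thesis unfolding nfs_conj_char[OF X] using id_in_F[OF subS] by (metis (mono_tags, lifting) mem_Collect_eq)
qed

lemma FSS_sub: "\<beta> \<in> F (carrier S) (carrier S) \<Longrightarrow> subgroup X S \<Longrightarrow> subgroup (\<beta> ` X) S"
proof -
  assume b: "\<beta> \<in> F (carrier S) (carrier S)" and X: "subgroup X S"
  have bi: "\<beta> \<in> injhom S (carrier S) (carrier S)" using F_basic(2)[OF subS subS subS] b by blast
  have "\<beta> \<in> hom S S" using bi by (auto simp: injhom_def hom_def)
  then have "group_hom S S \<beta>" using grp by (simp add: group_hom_def group_hom_axioms_def)
  then show ?thesis using group_hom.subgroup_img_is_subgroup X by blast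
qed

lemma nfs_trans: assumes X: "subgroup X S" and Y: "Y \<in> nfs_conj S F X" and Z: "Z \<in> nfs_conj S F Y"
  shows "Z \<in> nfs_conj S F X"
proof -
  obtain \<beta>1 where b1: "\<beta>1 \<in> F (carrier S) (carrier S)" and Yd: "Y = \<beta>1 ` X" using Y nfs_conj_char[OF X] by blast
  have Ys: "subgroup Y S" using FSS_sub[OF b1 X] Yd by simp
  obtain \<beta>2 where b2: "\<beta>2 \<in> F (carrier S) (carrier S)" and Zd: "Z = \<beta>2 ` Y" using Z nfs_conj_char[OF Ys] by blast
  have "Z = restrict (\<beta>2 \<circ> \<beta>1) (carrier S) ` X" using Yd Zd subgroup.subset[OF X] by auto
  then show ?thesis unfolding nfs_conj_char[OF X] using FSS_comp[OF b1 b2] by blast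
qed

lemma nfs_sym: assumes X: "subgroup X S" and Y: "Y \<in> nfs_conj S F X"
  shows "X \<in> nfs_conj S F Y"
proof -
  obtain \<beta> where b: "\<beta> \<in> F (carrier S) (carrier S)" and Yd: "Y = \<beta> ` X" using Y nfs_conj_char[OF X] by blast
  have Ys: "subgroup Y S" using FSS_sub[OF b X] Yd by simp
  have bS: "\<beta> ` carrier S = carrier S" by (rule surjF[OF b])
  have bi: "\<beta> \<in> injhom S (carrier S) (carrier S)" using F_basic(2)[OF subS subS subS] b by blast
  have "restrict (inv_into (carrier S) \<beta>) (\<beta> ` carrier S) \<in> F (\<beta> ` carrier S) (carrier S)"
    using F_basic(4)[OF subS subS subS b] by blast
  then have b': "restrict (inv_into (carrier S) \<beta>) (carrier S) \<in> F (carrier S) (carrier S)" using bS by simp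
  have "restrict (inv_into (carrier S) \<beta>) (carrier S) ` Y = (\<lambda>x. x) ` X"
    unfolding Yd image_image
  proof (rule image_cong[OF refl])
    fix x assume x: "x \<in> X"
    have xS: "x \<in> carrier S" using x subgroup.subset[OF X] by blast
    then show "restrict (inv_into (carrier S) \<beta>) (carrier S) (\<beta> x) = x"
      using FSS_into[OF b xS] inv_into_f_f[OF injhomD(3)[OF bi] xS] by simp
  qed
  then have "restrict (inv_into (carrier S) \<beta>) (carrier S) ` Y = X" by simp
  then show ?thesis unfolding nfs_conj_char[OF Ys] using b' by blast
qed

lemma nfs_S: assumes X: "subgroup X S" and e: "carrier S \<in> nfs_conj S F X" shows "X = carrier S"
proof -
  obtain \<beta> where b: "\<beta> \<in> F (carrier S) (carrier S)" and Yd: "carrier S = \<beta> ` X" using e nfs_conj_char[OF X] by blast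
  have bi: "\<beta> \<in> injhom S (carrier S) (carrier S)" using F_basic(2)[OF subS subS subS] b by blast
  have "\<beta> ` X = \<beta> ` carrier S" using Yd surjF[OF b] by simp
  then show ?thesis using inj_on_image_eq_iff[OF injhomD(3)[OF bi] subgroup.subset[OF X]] by blast
qed

end



context ctx begin

lemma eqvI: "\<Psi> \<in> AutI_typ S F L \<Longrightarrow> eqv p S F L \<Psi>"
  using ctx_axioms by (simp add: eqv_def eqv_axioms_def)

lemma iso_cmp:
  assumes X: "X \<in> Ob" and Y: "Y \<in> Ob" and Z: "Z \<in> Ob" and f: "L_iso L X Y f" and g: "L_iso L Y Z g"
  shows "L_iso L X Z (L_cmp L X Y Z g f)"
proof -
  obtain f' where fm: "f \<in> L_mor L X Y" and f'm: "f' \<in> L_mor L Y X"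
    and ff1: "L_cmp L X Y X f' f = L_id L X" and ff2: "L_cmp L Y X Y f f' = L_id L Y"
    using f unfolding L_iso_def by blast
  obtain g' where gm: "g \<in> L_mor L Y Z" and g'm: "g' \<in> L_mor L Z Y"
    and gg1: "L_cmp L Y Z Y g' g = L_id L Y" and gg2: "L_cmp L Z Y Z g g' = L_id L Z"
    using g unfolding L_iso_def by blast
  have h: "L_cmp L X Y Z g f \<in> L_mor L X Z" by (rule cat_cmp[OF X Y Z fm gm])
  have h': "L_cmp L Z Y X f' g' \<in> L_mor L Z X" by (rule cat_cmp[OF Z Y X g'm f'm])
  have "L_cmp L Y Z X (L_cmp L Z Y X f' g') g = L_cmp L Y Y X f' (L_cmp L Y Z Y g' g)"
    using cat_assoc[OF Y Z Y X gm g'm f'm] by simp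
  also have "\<dots> = f'" using gg1 cat_idr[OF Y X f'm] by simp
  finally have e1: "L_cmp L Y Z X (L_cmp L Z Y X f' g') g = f'" .
  have "L_cmp L X Z X (L_cmp L Z Y X f' g') (L_cmp L X Y Z g f) = L_cmp L X Y X (L_cmp L Y Z X (L_cmp L Z Y X f' g') g) f"
    using cat_assoc[OF X Y Z X fm gm h'] by simp
  also have "\<dots> = L_id L X" using e1 ff1 by simp
  finally have i1: "L_cmp L X Z X (L_cmp L Z Y X f' g') (L_cmp L X Y Z g f) = L_id L X" .
  have "L_cmp L Z X Z (L_cmp L X Y Z g f) (L_cmp L Z Y X f' g') = L_cmp L Z Y Z (L_cmp L Y X Z (L_cmp L X Y Z g f) f') g'"
    using cat_assoc[OF Z Y X Z g'm f'm h] by simp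
  also have "L_cmp L Y X Z (L_cmp L X Y Z g f) f' = L_cmp L Y Y Z g (L_cmp L Y X Y f f')"
    using cat_assoc[OF Y X Y Z f'm fm gm] by simp
  also have "\<dots> = g" using ff2 cat_idr[OF Y Z gm] by simp
  finally have i2: "L_cmp L Z X Z (L_cmp L X Y Z g f) (L_cmp L Z Y X f' g') = L_id L Z" using gg2 by simp
  show ?thesis unfolding L_iso_def using h h' i1 i2 by blast
qed

lemma natiso_refl: assumes \<Psi>: "\<Psi> \<in> AutI_typ S F L" shows "nat_iso Ob L \<Psi> \<Psi>"
proof -
  interpret e: eqv p S F L \<Psi> by (rule eqvI[OF \<Psi>])
  have "L_iso L (fst \<Psi> P) (fst \<Psi> P) (L_id L (fst \<Psi> P))" if P: "P \<in> Ob" for P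
  proof -
    have PP: "fst \<Psi> P \<in> Ob" by (rule e.Po_Ob[OF P])
    show ?thesis unfolding L_iso_def using cat_id[OF PP] cat_idl[OF PP PP cat_id[OF PP]] by blast
  qed
  moreover have "L_cmp L (fst \<Psi> P) (fst \<Psi> Q) (fst \<Psi> Q) (L_id L (fst \<Psi> Q)) (snd \<Psi> P Q f) =
        L_cmp L (fst \<Psi> P) (fst \<Psi> P) (fst \<Psi> Q) (snd \<Psi> P Q f) (L_id L (fst \<Psi> P))"
    if P: "P \<in> Ob" and Q: "Q \<in> Ob" and f: "f \<in> L_mor L P Q" for P Q f
    using cat_idl[OF e.Po_Ob[OF P] e.Po_Ob[OF Q] e.Pm_mor[OF P Q Q f]]
      cat_idr[OF e.Po_Ob[OF P] e.Po_Ob[OF Q] e.Pm_mor[OF P Q Q f]] by simp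
  ultimately show ?thesis unfolding nat_iso_def by (intro exI[of _ "\<lambda>P. L_id L (fst \<Psi> P)"]) blast
qed

lemma natiso_nfs:
  assumes \<Theta>: "\<Theta> \<in> AutI_typ S F L" and \<Psi>: "\<Psi> \<in> AutI_typ S F L" and ni: "nat_iso Ob L \<Theta> \<Psi>"
    and X: "X \<in> Ob"
  shows "fst \<Psi> X \<in> nfs_conj S F (fst \<Theta> X)"
proof -
  interpret T: eqv p S F L \<Theta> by (rule eqvI[OF \<Theta>])
  interpret U: eqv p S F L \<Psi> by (rule eqvI[OF \<Psi>])
  let ?S = "carrier S"
  obtain \<eta> where iso: "\<And>P. P \<in> Ob \<Longrightarrow> L_iso L (fst \<Theta> P) (fst \<Psi> P) (\<eta> P)"
    and nat: "\<And>P Q f. P \<in> Ob \<Longrightarrow> Q \<in> Ob \<Longrightarrow> f \<in> L_mor L P Q \<Longrightarrow>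
        L_cmp L (fst \<Theta> P) (fst \<Theta> Q) (fst \<Psi> Q) (\<eta> Q) (snd \<Theta> P Q f) =
        L_cmp L (fst \<Theta> P) (fst \<Psi> P) (fst \<Psi> Q) (snd \<Psi> P Q f) (\<eta> P)"
    using ni unfolding nat_iso_def by blast
  have TX: "fst \<Theta> X \<in> Ob" and UX: "fst \<Psi> X \<in> Ob" using T.Po_Ob U.Po_Ob X by auto
  have XS: "X \<subseteq> ?S" using Ob_subset[OF X] .
  have TXS: "fst \<Theta> X \<subseteq> ?S" and UXS: "fst \<Psi> X \<subseteq> ?S" using Ob_subset TX UX by auto
  have t1: "\<one> \<in> transp S X ?S" by (rule transp_one[OF Ob_sub[OF X] XS])
  have fm: "L_dlt L X ?S \<one> \<in> L_mor L X ?S" by (rule dlt_mor[OF X S_Ob S_Ob t1])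
  have nt: "L_cmp L (fst \<Theta> X) ?S ?S (\<eta> ?S) (L_dlt L (fst \<Theta> X) ?S \<one>) =
        L_cmp L (fst \<Theta> X) (fst \<Psi> X) ?S (L_dlt L (fst \<Psi> X) ?S \<one>) (\<eta> X)"
    using nat[OF X S_Ob fm] T.incl[OF X S_Ob XS] U.incl[OF X S_Ob XS] T.PoS U.PoS by simp
  have eS: "\<eta> ?S \<in> L_mor L ?S ?S" using iso[OF S_Ob] T.PoS U.PoS unfolding L_iso_def by simp
  have eX: "\<eta> X \<in> L_mor L (fst \<Theta> X) (fst \<Psi> X)" using iso[OF X] unfolding L_iso_def by blast
  have tT: "\<one> \<in> transp S (fst \<Theta> X) ?S" by (rule transp_one[OF Ob_sub[OF TX] TXS])
  have tU: "\<one> \<in> transp S (fst \<Psi> X) ?S" by (rule transp_one[OF Ob_sub[OF UX] UXS])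
  let ?\<beta> = "L_prj L ?S ?S (\<eta> ?S)" and ?\<psi> = "L_prj L (fst \<Theta> X) (fst \<Psi> X) (\<eta> X)"
  have l: "L_prj L (fst \<Theta> X) ?S (L_cmp L (fst \<Theta> X) ?S ?S (\<eta> ?S) (L_dlt L (fst \<Theta> X) ?S \<one>))
     = restrict (?\<beta> \<circ> restrict (conjm S \<one>) (fst \<Theta> X)) (fst \<Theta> X)"
    using prj_cmp[OF TX S_Ob S_Ob dlt_mor[OF TX S_Ob S_Ob tT] eS] axB[OF TX S_Ob S_Ob tT] by simp
  have r: "L_prj L (fst \<Theta> X) ?S (L_cmp L (fst \<Theta> X) (fst \<Psi> X) ?S (L_dlt L (fst \<Psi> X) ?S \<one>) (\<eta> X))
     = restrict (restrict (conjm S \<one>) (fst \<Psi> X) \<circ> ?\<psi>) (fst \<Theta> X)"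
    using prj_cmp[OF TX UX S_Ob eX dlt_mor[OF UX S_Ob S_Ob tU]] axB[OF UX S_Ob S_Ob tU] by simp
  have \<psi>i: "?\<psi> \<in> injhom S (fst \<Theta> X) (fst \<Psi> X)"
    using F_basic(2)[OF Ob_sub[OF TX] Ob_sub[OF UX] Ob_sub[OF UX]] prj_F[OF TX UX UX eX] by blast
  have bx: "?\<beta> x = ?\<psi> x" if x: "x \<in> fst \<Theta> X" for x
  proof -
    have "restrict (?\<beta> \<circ> restrict (conjm S \<one>) (fst \<Theta> X)) (fst \<Theta> X) x
        = restrict (restrict (conjm S \<one>) (fst \<Psi> X) \<circ> ?\<psi>) (fst \<Theta> X) x"
      using l r nt by simp
    moreover have "conjm S \<one> x = x" using x TXS conjm_one by blast
    moreover have "conjm S \<one> (?\<psi> x) = ?\<psi> x" using injhomD(2)[OF \<psi>i x] UXS conjm_one by blast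
    ultimately show ?thesis using x injhomD(2)[OF \<psi>i x] by simp
  qed
  have "?\<beta> ` fst \<Theta> X = ?\<psi> ` fst \<Theta> X" using bx by (rule image_cong[OF refl])
  also have "\<dots> = fst \<Psi> X" by (rule Liso_img[OF TX UX iso[OF X]])
  finally have im: "?\<beta> ` fst \<Theta> X = fst \<Psi> X" .
  have "?\<beta> \<in> F ?S ?S" by (rule prj_F[OF S_Ob S_Ob S_Ob eS])
  then show ?thesis unfolding nfs_conj_char[OF Ob_sub[OF TX]] using im by blast
qed

end

context eqv begin

lemma Pm_iso: assumes X: "X \<in> Ob" and Y: "Y \<in> Ob" and f: "L_iso L X Y f"
  shows "L_iso L (Po X) (Po Y) (Pm X Y f)"
proof -
  obtain g where fm: "f \<in> L_mor L X Y" and gm: "g \<in> L_mor L Y X"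
    and e1: "L_cmp L X Y X g f = L_id L X" and e2: "L_cmp L Y X Y f g = L_id L Y"
    using f unfolding L_iso_def by blast
  have "L_cmp L (Po X) (Po Y) (Po X) (Pm Y X g) (Pm X Y f) = L_id L (Po X)"
    using Pm_cmp[OF X Y X fm gm] e1 Pm_id[OF X X X] by simp
  moreover have "L_cmp L (Po Y) (Po X) (Po Y) (Pm X Y f) (Pm Y X g) = L_id L (Po Y)"
    using Pm_cmp[OF Y X Y gm fm] e2 Pm_id[OF Y Y Y] by simp
  ultimately show ?thesis unfolding L_iso_def using Pm_mor[OF X Y Y fm] Pm_mor[OF Y X X gm] by blast
qed

lemma Po_mono: "P \<in> Ob \<Longrightarrow> Q \<in> Ob \<Longrightarrow> P \<subseteq> Q \<Longrightarrow> Po P \<subseteq> Po Q"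
  using Po_img by (metis image_mono)

end

context ctx begin

lemma fcomp_AutI: assumes \<Psi>: "\<Psi> \<in> AutI_typ S F L" and \<Phi>: "\<Phi> \<in> AutI_typ S F L"
  shows "fcomp \<Psi> \<Phi> \<in> AutI_typ S F L"
proof -
  interpret a: eqv p S F L \<Psi> by (rule eqvI[OF \<Psi>])
  interpret b: eqv p S F L \<Phi> by (rule eqvI[OF \<Phi>])
  have fc: "fst (fcomp \<Psi> \<Phi>) = (\<lambda>P. fst \<Psi> (fst \<Phi> P))" by (simp add: fcomp_def fun_eq_iff)
  have sc: "snd (fcomp \<Psi> \<Phi>) = (\<lambda>P Q f. snd \<Psi> (fst \<Phi> P) (fst \<Phi> Q) (snd \<Phi> P Q f))" by (simp add: fcomp_def)
  have fnc: "is_functor Ob L (fcomp \<Psi> \<Phi>)"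
    unfolding is_functor_def fc sc
  proof (intro conjI ballI)
    fix P assume P: "P \<in> Ob" show "fst \<Psi> (fst \<Phi> P) \<in> Ob" using a.Po_Ob b.Po_Ob P by blast
  next
    fix P Q R assume P: "P \<in> Ob" and Q: "Q \<in> Ob" and R: "R \<in> Ob"
    have P': "fst \<Phi> P \<in> Ob" and Q': "fst \<Phi> Q \<in> Ob" and R': "fst \<Phi> R \<in> Ob" using b.Po_Ob P Q R by auto
    show "snd \<Psi> (fst \<Phi> P) (fst \<Phi> P) (snd \<Phi> P P (L_id L P)) = L_id L (fst \<Psi> (fst \<Phi> P))"
      using b.Pm_id[OF P P P] a.Pm_id[OF P' P' P'] by simp
  next
    fix P Q R f assume P: "P \<in> Ob" and Q: "Q \<in> Ob" and R: "R \<in> Ob" and f: "f \<in> L_mor L P Q"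
    have P': "fst \<Phi> P \<in> Ob" and Q': "fst \<Phi> Q \<in> Ob" using b.Po_Ob P Q by auto
    show "snd \<Psi> (fst \<Phi> P) (fst \<Phi> Q) (snd \<Phi> P Q f) \<in> L_mor L (fst \<Psi> (fst \<Phi> P)) (fst \<Psi> (fst \<Phi> Q))"
      using b.Pm_mor[OF P Q Q f] a.Pm_mor[OF P' Q' Q'] by blast
  next
    fix P Q R f g assume P: "P \<in> Ob" and Q: "Q \<in> Ob" and R: "R \<in> Ob" and f: "f \<in> L_mor L P Q"
      and g: "g \<in> L_mor L Q R"
    have P': "fst \<Phi> P \<in> Ob" and Q': "fst \<Phi> Q \<in> Ob" and R': "fst \<Phi> R \<in> Ob" using b.Po_Ob P Q R by auto
    show "snd \<Psi> (fst \<Phi> P) (fst \<Phi> R) (snd \<Phi> P R (L_cmp L P Q R g f)) =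
       L_cmp L (fst \<Psi> (fst \<Phi> P)) (fst \<Psi> (fst \<Phi> Q)) (fst \<Psi> (fst \<Phi> R))
        (snd \<Psi> (fst \<Phi> Q) (fst \<Phi> R) (snd \<Phi> Q R g)) (snd \<Psi> (fst \<Phi> P) (fst \<Phi> Q) (snd \<Phi> P Q f))"
      using b.Pm_cmp[OF P Q R f g] a.Pm_cmp[OF P' Q' R' b.Pm_mor[OF P Q Q f] b.Pm_mor[OF Q R R g]] by simp
  qed
  have bij: "bij_betw (snd (fcomp \<Psi> \<Phi>) P Q) (L_mor L P Q) (L_mor L (fst (fcomp \<Psi> \<Phi>) P) (fst (fcomp \<Psi> \<Phi>) Q))"
    if P: "P \<in> Ob" and Q: "Q \<in> Ob" for P Q
  proof -
    have "bij_betw (snd \<Psi> (fst \<Phi> P) (fst \<Phi> Q) \<circ> snd \<Phi> P Q) (L_mor L P Q) (L_mor L (fst \<Psi> (fst \<Phi> P)) (fst \<Psi> (fst \<Phi> Q)))"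
      by (rule bij_betw_trans[OF b.Pm_bij[OF P Q] a.Pm_bij[OF b.Po_Ob[OF P] b.Po_Ob[OF Q]]])
    then show ?thesis unfolding fc sc by (simp add: comp_def)
  qed
  have ess: "\<exists>P\<in>Ob. \<exists>f. L_iso L (fst (fcomp \<Psi> \<Phi>) P) Q f" if Q: "Q \<in> Ob" for Q
  proof -
    obtain P1 f1 where P1: "P1 \<in> Ob" and f1: "L_iso L (fst \<Psi> P1) Q f1" using a.ess[OF Q] by blast
    obtain P2 f2 where P2: "P2 \<in> Ob" and f2: "L_iso L (fst \<Phi> P2) P1 f2" using b.ess[OF P1] by blast
    have "L_iso L (fst \<Psi> (fst \<Phi> P2)) (fst \<Psi> P1) (snd \<Psi> (fst \<Phi> P2) P1 f2)"
      by (rule a.Pm_iso[OF b.Po_Ob[OF P2] P1 f2])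
    then have "L_iso L (fst \<Psi> (fst \<Phi> P2)) Q (L_cmp L (fst \<Psi> (fst \<Phi> P2)) (fst \<Psi> P1) Q f1 (snd \<Psi> (fst \<Phi> P2) P1 f2))"
      by (rule iso_cmp[OF a.Po_Ob[OF b.Po_Ob[OF P2]] a.Po_Ob[OF P1] Q _ f1])
    then show ?thesis using P2 unfolding fc by blast
  qed
  have isot: "snd (fcomp \<Psi> \<Phi>) P P ` (L_dlt L P P ` P) = L_dlt L (fst (fcomp \<Psi> \<Phi>) P) (fst (fcomp \<Psi> \<Phi>) P) ` (fst (fcomp \<Psi> \<Phi>) P)"
    if P: "P \<in> Ob" for P
  proof -
    have "snd (fcomp \<Psi> \<Phi>) P P ` (L_dlt L P P ` P) = snd \<Psi> (fst \<Phi> P) (fst \<Phi> P) ` snd \<Phi> P P ` (L_dlt L P P ` P)"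
      unfolding sc by (simp add: image_image)
    also have "\<dots> = snd \<Psi> (fst \<Phi> P) (fst \<Phi> P) ` (L_dlt L (fst \<Phi> P) (fst \<Phi> P) ` fst \<Phi> P)"
      using b.isot[OF P] by simp
    also have "\<dots> = L_dlt L (fst \<Psi> (fst \<Phi> P)) (fst \<Psi> (fst \<Phi> P)) ` fst \<Psi> (fst \<Phi> P)"
      using a.isot[OF b.Po_Ob[OF P]] by simp
    finally show ?thesis unfolding fc by simp
  qed
  have incl: "snd (fcomp \<Psi> \<Phi>) P Q (L_dlt L P Q \<one>) = L_dlt L (fst (fcomp \<Psi> \<Phi>) P) (fst (fcomp \<Psi> \<Phi>) Q) \<one>"
    if P: "P \<in> Ob" and Q: "Q \<in> Ob" and PQ: "P \<subseteq> Q" for P Q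
    unfolding fc sc using b.incl[OF P Q PQ] a.incl[OF b.Po_Ob[OF P] b.Po_Ob[OF Q] b.Po_mono[OF P Q PQ]] by simp
  have se: "self_equivalence Ob L (fcomp \<Psi> \<Phi>)" unfolding self_equivalence_def
  proof (intro conjI ballI)
    show "is_functor Ob L (fcomp \<Psi> \<Phi>)" by (rule fnc)
  next
    fix P Q assume "P \<in> Ob" "Q \<in> Ob" then show "bij_betw (snd (fcomp \<Psi> \<Phi>) P Q) (L_mor L P Q) (L_mor L (fst (fcomp \<Psi> \<Phi>) P) (fst (fcomp \<Psi> \<Phi>) Q))" by (rule bij)
  next
    fix Q assume "Q \<in> Ob" then show "\<exists>P\<in>Ob. \<exists>f. L_iso L (fst (fcomp \<Psi> \<Phi>) P) Q f" by (rule ess)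
  qed
  show ?thesis unfolding AutI_typ_def
  proof (intro CollectI conjI ballI impI)
    show "self_equivalence Ob L (fcomp \<Psi> \<Phi>)" by (rule se)
  next
    fix P assume "P \<in> Ob" then show "snd (fcomp \<Psi> \<Phi>) P P ` (L_dlt L P P ` P) = L_dlt L (fst (fcomp \<Psi> \<Phi>) P) (fst (fcomp \<Psi> \<Phi>) P) ` (fst (fcomp \<Psi> \<Phi>) P)" by (rule isot)
  next
    fix P Q assume "P \<in> Ob" "Q \<in> Ob" "P \<subseteq> Q"
    then show "snd (fcomp \<Psi> \<Phi>) P Q (L_dlt L P Q \<one>) = L_dlt L (fst (fcomp \<Psi> \<Phi>) P) (fst (fcomp \<Psi> \<Phi>) Q) \<one>" by (rule incl)
  qed
qed

end




definition pmf :: "'g monoid \<Rightarrow> ('g set \<Rightarrow> 'g set \<Rightarrow> ('g \<Rightarrow> 'g) set) \<Rightarrow> (nat \<Rightarrow> 'g set) \<Rightarrow> nat \<Rightarrow> ('g, 'm) fnctr \<Rightarrow> nat \<Rightarrow> nat" where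
  "pmf S F P k \<Psi> i = (if i \<in> {1..k} then (THE j. j \<le> k \<and> P j \<in> nfs_conj S F (fst \<Psi> (P i))) else i)"

context ctx begin

context fixes P k assumes cf: "complete_fcf p S F P k"
begin

lemma pm_out: assumes "i \<notin> {1..k}" shows "pmf S F P k \<Psi> i = i"
  unfolding pmf_def by (rule if_not_P[OF assms])

lemma cfD: "P 0 = carrier S" "\<And>i. i \<le> k \<Longrightarrow> P i \<in> Ob"
    "\<And>i j. i \<le> k \<Longrightarrow> j \<le> k \<Longrightarrow> P j \<in> nfs_conj S F (P i) \<Longrightarrow> i = j"
    "\<And>Q. F_centric S F Q \<Longrightarrow> F_radical p S F Q \<Longrightarrow> \<exists>i\<le>k. P i \<in> nfs_conj S F Q"
  using cf unfolding complete_fcf_def fusion_controlling_family_def L_ob_def by blast+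

lemma Xsub: assumes \<Psi>: "\<Psi> \<in> AutI_typ S F L" and i: "i \<le> k" shows "fst \<Psi> (P i) \<in> Ob"
proof -
  interpret e: eqv p S F L \<Psi> by (rule eqvI[OF \<Psi>])
  show ?thesis using e.Po_Ob cfD(2)[OF i] by blast
qed

lemma uniq: assumes \<Psi>: "\<Psi> \<in> AutI_typ S F L" and i: "i \<le> k" and j: "j \<le> k" and j': "j' \<le> k"
  and a: "P j \<in> nfs_conj S F (fst \<Psi> (P i))" and b: "P j' \<in> nfs_conj S F (fst \<Psi> (P i))"
  shows "j' = j"
proof -
  have Xs: "subgroup (fst \<Psi> (P i)) S" using Ob_sub[OF Xsub[OF \<Psi> i]] .
  have "fst \<Psi> (P i) \<in> nfs_conj S F (P j)" by (rule nfs_sym[OF Xs a])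
  then have "P j' \<in> nfs_conj S F (P j)" using nfs_trans[OF Ob_sub[OF cfD(2)[OF j]] _ b] by blast
  then show ?thesis using cfD(3)[OF j j'] by simp
qed

lemma pm_spec: assumes \<Psi>: "\<Psi> \<in> AutI_typ S F L" and i: "i \<in> {1..k}"
  shows "pmf S F P k \<Psi> i \<in> {1..k} \<and> P (pmf S F P k \<Psi> i) \<in> nfs_conj S F (fst \<Psi> (P i))"
proof -
  interpret e: eqv p S F L \<Psi> by (rule eqvI[OF \<Psi>])
  interpret A: fpa p S F L e.al e.ali by (rule e.fpA)
  have ik: "i \<le> k" using i by simp
  have cf2: "complete_fcf p S F (\<lambda>i. fst \<Psi> (P i)) k" by (rule e.part1[OF cf])
  have "F_centric S F (fst \<Psi> (P i)) \<and> F_radical p S F (fst \<Psi> (P i))"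
    using cf2 ik unfolding complete_fcf_def by blast
  then obtain j where j: "j \<le> k" and Pj: "P j \<in> nfs_conj S F (fst \<Psi> (P i))" using cfD(4) by blast
  have th: "(THE j. j \<le> k \<and> P j \<in> nfs_conj S F (fst \<Psi> (P i))) = j"
    by (rule the_equality) (use j Pj uniq[OF \<Psi> ik j] in blast)+
  have "j \<noteq> 0"
  proof
    assume "j = 0"
    then have "carrier S \<in> nfs_conj S F (fst \<Psi> (P i))" using Pj cfD(1) by simp
    then have "fst \<Psi> (P i) = carrier S" using nfs_S Ob_sub[OF Xsub[OF \<Psi> ik]] by blast
    then have "e.al ` P i = e.al ` carrier S" using e.Po_img[OF cfD(2)[OF ik]] e.al_surj by simp
    then have "P i = carrier S" using A.img_eq_iff Ob_subset[OF cfD(2)[OF ik]] by blast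
    then have "P 0 \<in> nfs_conj S F (P i)" using nfs_refl[OF subS] cfD(1) by simp
    then show False using cfD(3)[OF ik, of 0] i by simp
  qed
  then show ?thesis using th j Pj i by (simp add: pmf_def)
qed

lemma pm_eq: assumes \<Psi>: "\<Psi> \<in> AutI_typ S F L" and i: "i \<in> {1..k}" and j: "j \<le> k"
  and Pj: "P j \<in> nfs_conj S F (fst \<Psi> (P i))" shows "pmf S F P k \<Psi> i = j"
  using uniq[OF \<Psi> _ _ j _ Pj] pm_spec[OF \<Psi> i] i by auto

lemma pm_perm: assumes \<Psi>: "\<Psi> \<in> AutI_typ S F L" shows "pmf S F P k \<Psi> permutes {1..k}"
proof (rule inj_imp_permutes)
  interpret e: eqv p S F L \<Psi> by (rule eqvI[OF \<Psi>])
  interpret B: fpa p S F L e.ali e.al by (rule e.fpB)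
  interpret A: fpa p S F L e.al e.ali by (rule e.fpA)
  show "inj_on (pmf S F P k \<Psi>) {1..k}"
  proof (rule inj_onI)
    fix i i' assume i: "i \<in> {1..k}" and i': "i' \<in> {1..k}" and e: "pmf S F P k \<Psi> i = pmf S F P k \<Psi> i'"
    have ik: "i \<le> k" and i'k: "i' \<le> k" using i i' by auto
    let ?j = "pmf S F P k \<Psi> i"
    have a: "P ?j \<in> nfs_conj S F (fst \<Psi> (P i))" using pm_spec[OF \<Psi> i] by blast
    have b: "P ?j \<in> nfs_conj S F (fst \<Psi> (P i'))" using pm_spec[OF \<Psi> i'] e by simp
    have Xs: "subgroup (fst \<Psi> (P i)) S" and X's: "subgroup (fst \<Psi> (P i')) S"
      using Ob_sub[OF Xsub[OF \<Psi> ik]] Ob_sub[OF Xsub[OF \<Psi> i'k]] by auto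
    have "fst \<Psi> (P i') \<in> nfs_conj S F (P ?j)" by (rule nfs_sym[OF X's b])
    then have "fst \<Psi> (P i') \<in> nfs_conj S F (fst \<Psi> (P i))" by (rule nfs_trans[OF Xs a])
    then have "e.al ` P i' \<in> nfs_conj S F (e.al ` P i)"
      using e.Po_img[OF cfD(2)[OF ik]] e.Po_img[OF cfD(2)[OF i'k]] by simp
    then have "e.ali ` e.al ` P i' \<in> nfs_conj S F (e.ali ` e.al ` P i)"
      using B.nfs_conj_tr[OF Ob_sub[OF e.al_Ob[OF cfD(2)[OF ik]]]] by blast
    then have "P i' \<in> nfs_conj S F (P i)"
      using A.g'_img Ob_subset[OF cfD(2)[OF ik]] Ob_subset[OF cfD(2)[OF i'k]] by simp
    then show "i = i'" using cfD(3)[OF ik i'k] by simp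
  qed
  show "\<And>x. x \<in> {1..k} \<Longrightarrow> pmf S F P k \<Psi> x \<in> {1..k}" using pm_spec[OF \<Psi>] by blast
  show "\<And>x. x \<notin> {1..k} \<Longrightarrow> pmf S F P k \<Psi> x = x" by (rule pm_out)
qed (simp)

lemma pm_natiso: assumes \<Theta>: "\<Theta> \<in> AutI_typ S F L" and \<Psi>: "\<Psi> \<in> AutI_typ S F L"
  and ni: "nat_iso Ob L \<Theta> \<Psi>" shows "pmf S F P k \<Theta> = pmf S F P k \<Psi>"
proof
  fix i show "pmf S F P k \<Theta> i = pmf S F P k \<Psi> i"
  proof (cases "i \<in> {1..k}")
    case True
    have ik: "i \<le> k" using True by simp
    have a: "P (pmf S F P k \<Psi> i) \<in> nfs_conj S F (fst \<Psi> (P i))" and jk: "pmf S F P k \<Psi> i \<le> k"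
      using pm_spec[OF \<Psi> True] by auto
    have "fst \<Psi> (P i) \<in> nfs_conj S F (fst \<Theta> (P i))" by (rule natiso_nfs[OF \<Theta> \<Psi> ni cfD(2)[OF ik]])
    then have "P (pmf S F P k \<Psi> i) \<in> nfs_conj S F (fst \<Theta> (P i))"
      using nfs_trans[OF Ob_sub[OF Xsub[OF \<Theta> ik]] _ a] by blast
    then show ?thesis by (rule pm_eq[OF \<Theta> True jk])
  next
    case False then show ?thesis using pm_out[OF False, of \<Theta>] pm_out[OF False, of \<Psi>] by simp
  qed
qed

lemma pm_comp: assumes \<Psi>: "\<Psi> \<in> AutI_typ S F L" and \<Phi>: "\<Phi> \<in> AutI_typ S F L"
  shows "pmf S F P k (fcomp \<Psi> \<Phi>) = pmf S F P k \<Psi> \<circ> pmf S F P k \<Phi>"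
proof
  interpret e: eqv p S F L \<Psi> by (rule eqvI[OF \<Psi>])
  interpret A: fpa p S F L e.al e.ali by (rule e.fpA)
  fix i show "pmf S F P k (fcomp \<Psi> \<Phi>) i = (pmf S F P k \<Psi> \<circ> pmf S F P k \<Phi>) i"
  proof (cases "i \<in> {1..k}")
    case True
    have ik: "i \<le> k" using True by simp
    let ?j = "pmf S F P k \<Phi> i"
    have j: "?j \<in> {1..k}" and a: "P ?j \<in> nfs_conj S F (fst \<Phi> (P i))" using pm_spec[OF \<Phi> True] by auto
    have jk: "?j \<le> k" using j by simp
    let ?l = "pmf S F P k \<Psi> ?j"
    have l: "?l \<in> {1..k}" and b: "P ?l \<in> nfs_conj S F (fst \<Psi> (P ?j))" using pm_spec[OF \<Psi> j] by auto
    have X: "fst \<Phi> (P i) \<in> Ob" by (rule Xsub[OF \<Phi> ik])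
    have "e.al ` P ?j \<in> nfs_conj S F (e.al ` fst \<Phi> (P i))" by (rule A.nfs_conj_tr[OF Ob_sub[OF X] a])
    then have c: "fst \<Psi> (P ?j) \<in> nfs_conj S F (fst \<Psi> (fst \<Phi> (P i)))"
      using e.Po_img[OF X] e.Po_img[OF cfD(2)[OF jk]] by simp
    have "P ?l \<in> nfs_conj S F (fst \<Psi> (fst \<Phi> (P i)))"
      by (rule nfs_trans[OF Ob_sub[OF e.Po_Ob[OF X]] c b])
    then have "P ?l \<in> nfs_conj S F (fst (fcomp \<Psi> \<Phi>) (P i))" by (simp add: fcomp_def)
    then show ?thesis using pm_eq[OF fcomp_AutI[OF \<Psi> \<Phi>] True] l by simp
  next
    case False then show ?thesis using pm_out[OF False, of "fcomp \<Psi> \<Phi>"] pm_out[OF False, of \<Psi>] pm_out[OF False, of \<Phi>] by simp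
  qed
qed

end
end



theorem lemma3p5:
  fixes p :: nat and S :: "'g monoid" and F :: "'g set \<Rightarrow> 'g set \<Rightarrow> ('g \<Rightarrow> 'g) set"
    and L :: "('g, 'm) lsys" and P :: "nat \<Rightarrow> 'g set" and k :: nat
  assumes "p_local_compact_group p S F L"
    and "complete_fcf p S F P k"
  shows "(\<forall>\<Psi>\<in>AutI_typ S F L. complete_fcf p S F (\<lambda>i. fst \<Psi> (P i)) k) \<and>
         (\<exists>\<upsilon>. \<upsilon> \<in> hom (Out_typ S F L) (sym_group k) \<and>
              (\<forall>\<Psi>\<in>AutI_typ S F L. \<forall>i\<in>{1..k}.
                  P (\<upsilon> (out_class S F L \<Psi>) i) \<in> nfs_conj S F (fst \<Psi> (P i))))"
proof -
  note plcg = assms(1) and cf = assms(2)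
  have P0: "P 0 = carrier S" and fn0: "fully_normalized p S F (P 0)" and cen0: "F_centric S F (P 0)"
    using cf unfolding complete_fcf_def fusion_controlling_family_def by auto
  interpret ctx p S F L using plcg fn0 cen0 P0 by (simp add: ctx_def)
  have part1: "\<forall>\<Psi>\<in>AutI_typ S F L. complete_fcf p S F (\<lambda>i. fst \<Psi> (P i)) k"
  proof
    fix \<Psi> assume \<Psi>: "\<Psi> \<in> AutI_typ S F L"
    interpret e: eqv p S F L \<Psi> by (rule eqvI[OF \<Psi>])
    show "complete_fcf p S F (\<lambda>i. fst \<Psi> (P i)) k" by (rule e.part1[OF cf])
  qed
  define \<upsilon> where "\<upsilon> A = pmf S F P k (SOME \<Theta>. \<Theta> \<in> A)" for A :: "('g, 'm) fnctr set"
  have cls: "\<upsilon> (out_class S F L \<Psi>) = pmf S F P k \<Psi>" if \<Psi>: "\<Psi> \<in> AutI_typ S F L" for \<Psi>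
  proof -
    have "\<Psi> \<in> out_class S F L \<Psi>" using \<Psi> natiso_refl[OF \<Psi>] by (simp add: out_class_def)
    then have "(SOME \<Theta>. \<Theta> \<in> out_class S F L \<Psi>) \<in> out_class S F L \<Psi>" by (rule someI)
    then have "(SOME \<Theta>. \<Theta> \<in> out_class S F L \<Psi>) \<in> AutI_typ S F L"
      and "nat_iso (L_ob S F) L (SOME \<Theta>. \<Theta> \<in> out_class S F L \<Psi>) \<Psi>" by (simp_all add: out_class_def)
    then show ?thesis unfolding \<upsilon>_def using pm_natiso[OF cf _ \<Psi>] by blast
  qed
  have hom: "\<upsilon> \<in> hom (Out_typ S F L) (sym_group k)"
  proof (rule homI)
    fix A assume "A \<in> carrier (Out_typ S F L)"
    then obtain \<Psi> where \<Psi>: "\<Psi> \<in> AutI_typ S F L" and A: "A = out_class S F L \<Psi>" by (auto simp: Out_typ_def)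
    show "\<upsilon> A \<in> carrier (sym_group k)" using cls[OF \<Psi>] pm_perm[OF cf \<Psi>] A by (simp add: sym_group_def)
  next
    fix A B assume "A \<in> carrier (Out_typ S F L)" and "B \<in> carrier (Out_typ S F L)"
    then obtain \<Psi> \<Phi> where \<Psi>: "\<Psi> \<in> AutI_typ S F L" and A: "A = out_class S F L \<Psi>"
      and \<Phi>: "\<Phi> \<in> AutI_typ S F L" and B: "B = out_class S F L \<Phi>" by (auto simp: Out_typ_def)
    let ?M = "A \<otimes>\<^bsub>Out_typ S F L\<^esub> B"
    have M: "?M = {\<Theta>\<in>AutI_typ S F L. \<exists>\<Psi>'\<in>A. \<exists>\<Phi>'\<in>B. nat_iso (L_ob S F) L \<Theta> (fcomp \<Psi>' \<Phi>')}"
      by (simp add: Out_typ_def)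
    have PA: "\<Psi> \<in> A" using \<Psi> natiso_refl[OF \<Psi>] A by (simp add: out_class_def)
    have PB: "\<Phi> \<in> B" using \<Phi> natiso_refl[OF \<Phi>] B by (simp add: out_class_def)
    have fc: "fcomp \<Psi> \<Phi> \<in> AutI_typ S F L" by (rule fcomp_AutI[OF \<Psi> \<Phi>])
    have "fcomp \<Psi> \<Phi> \<in> ?M" unfolding M using fc natiso_refl[OF fc] PA PB by blast
    then have "(SOME \<Theta>. \<Theta> \<in> ?M) \<in> ?M" by (rule someI)
    then obtain \<Psi>' \<Phi>' where T: "(SOME \<Theta>. \<Theta> \<in> ?M) \<in> AutI_typ S F L" and \<Psi>'A: "\<Psi>' \<in> A" and \<Phi>'B: "\<Phi>' \<in> B"
      and ni: "nat_iso (L_ob S F) L (SOME \<Theta>. \<Theta> \<in> ?M) (fcomp \<Psi>' \<Phi>')" unfolding M by blast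
    have \<Psi>': "\<Psi>' \<in> AutI_typ S F L" and n1: "nat_iso (L_ob S F) L \<Psi>' \<Psi>" using \<Psi>'A A by (auto simp: out_class_def)
    have \<Phi>': "\<Phi>' \<in> AutI_typ S F L" and n2: "nat_iso (L_ob S F) L \<Phi>' \<Phi>" using \<Phi>'B B by (auto simp: out_class_def)
    have "\<upsilon> ?M = pmf S F P k (fcomp \<Psi>' \<Phi>')"
      unfolding \<upsilon>_def by (rule pm_natiso[OF cf T fcomp_AutI[OF \<Psi>' \<Phi>'] ni])
    also have "\<dots> = pmf S F P k \<Psi>' \<circ> pmf S F P k \<Phi>'" by (rule pm_comp[OF cf \<Psi>' \<Phi>'])
    also have "\<dots> = pmf S F P k \<Psi> \<circ> pmf S F P k \<Phi>"
      using pm_natiso[OF cf \<Psi>' \<Psi> n1] pm_natiso[OF cf \<Phi>' \<Phi> n2] by simp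
    also have "\<dots> = \<upsilon> A \<otimes>\<^bsub>sym_group k\<^esub> \<upsilon> B" using cls[OF \<Psi>] cls[OF \<Phi>] A B by (simp add: sym_group_def)
    finally show "\<upsilon> ?M = \<upsilon> A \<otimes>\<^bsub>sym_group k\<^esub> \<upsilon> B" .
  qed
  have rel: "\<forall>\<Psi>\<in>AutI_typ S F L. \<forall>i\<in>{1..k}. P (\<upsilon> (out_class S F L \<Psi>) i) \<in> nfs_conj S F (fst \<Psi> (P i))"
    using cls pm_spec[OF cf] by simp
  show ?thesis using part1 hom rel by blast
qed



end
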